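(* Let $U_\tau(so(2,2))$ be the (topological) algebra defined below. The coproduct $$\Delta(H)=1\otimes H+H\otimes 1,\qquad \Delta(P)=1\otimes P+P\otimes e^{\tau H},$$ $$\Delta(D)=1\otimes D+D\otimes e^{-\tau H},\qquad \Delta(C_1)=1\otimes C_1+C_1\otimes e^{-\tau H},$$ $$\Delta(K)=1\otimes K+K\otimes 1-\tau D\otimes e^{-\tau H}P,$$ $$\Delta(C_2)=1\otimes C_2+C_2\otimes e^{-\tau H}+2\tau D\otimes e^{-\tau H}K-\tau^2 D(D+1)\otimes e^{-2\tau H}P,$$ extended multiplicatively, is a well-defined coassociative algebra homomorphism $U_\tau(so(2,2))\to U_\tau(so(2,2))\hat\otimes U_\tau(so(2,2))$, i.e. it is compatible with all the defining commutation relations. Moreover, the subalgebra generated by $D,H,C_1$ is closed under $\Delta$ (so it is a sub-bialgebra, a non-standard quantum deformation of $sl(2,\mathbb R)$). In the limit $\tau\to0$ the commutation relations reduce to those of the real Lie algebra $so(2,2)$: $[K,H]=P,\ [K,P]=H,\ [H,P]=0,\ [D,H]=H,\ [D,C_1]=-C_1,\ [H,C_1]=-2D,\ [D,P]=P,\ [D,C_2]=-C_2,\ [P,C_2]=2D,\ [K,C_1]=C_2,\ [K,C_2]=C_1,\ [C_1,C_2]=0,\ [H,C_2]=2K,\ [P,C_1]=-2K,\ [K,D]=0$.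
   Context: Work over $\mathbb R[[\tau]]$ ($\tau$ a formal deformation parameter), with $\tau$-adic completions, so that $e^{a\tau H}=\sum_n (a\tau H)^n/n!$ makes sense. $U_\tau(so(2,2))$ is the completed associative unital algebra generated by $H,P,K,D,C_1,C_2$ subject to the commutation relations $[K,H]=e^{-\tau H}P$, $[K,P]=(e^{\tau H}-1)/\tau$, $[H,P]=0$, $[D,H]=(1-e^{-\tau H})/\tau$, $[D,C_1]=-C_1+\tau D^2$, $[H,C_1]=-2D$, $[D,P]=P$, $[D,C_2]=-C_2$, $[P,C_2]=2D$, $[K,C_1]=C_2$, $[K,C_2]=C_1-\tau D^2$, $[C_1,C_2]=-\tau(DC_2+C_2D)$, $[H,C_2]=e^{-\tau H}K+Ke^{-\tau H}$, $[P,C_1]=-2K-\tau(DP+PD)$, $[K,D]=0$. Here $(e^{\tau H}-1)/\tau$ and $(1-e^{-\tau H})/\tau$ denote the corresponding power series in $\tau$ and $H$. *)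

theory Defs
  imports Main "HOL.Real_Vector_Spaces"
begin

text \<open>An algebra over R[[tau]] is modelled as a real algebra 'a together with a
central element t (the image of tau).  Convergence is tau-adic convergence.\<close>

definition adic_div :: "'a::ring_1 \<Rightarrow> nat \<Rightarrow> 'a \<Rightarrow> bool" where
  "adic_div t k x \<longleftrightarrow> (\<exists>y. x = t ^ k * y)"

definition adic_conv :: "'a::ring_1 \<Rightarrow> (nat \<Rightarrow> 'a) \<Rightarrow> 'a \<Rightarrow> bool" where
  "adic_conv t s x \<longleftrightarrow> (\<forall>k. \<exists>N. \<forall>n\<ge>N. adic_div t k (x - s n))"

definition adic_cauchy :: "'a::ring_1 \<Rightarrow> (nat \<Rightarrow> 'a) \<Rightarrow> bool" where
  "adic_cauchy t s \<longleftrightarrow> (\<forall>k. \<exists>N. \<forall>m\<ge>N. \<forall>n\<ge>N. adic_div t k (s m - s n))"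

definition adic_ok :: "'a::ring_1 \<Rightarrow> bool" where
  "adic_ok t \<longleftrightarrow> (\<forall>y. t * y = y * t)
     \<and> (\<forall>x. (\<forall>k. adic_div t k x) \<longrightarrow> x = 0)
     \<and> (\<forall>s. adic_cauchy t s \<longrightarrow> (\<exists>x. adic_conv t s x))"

definition adic_lim :: "'a::ring_1 \<Rightarrow> (nat \<Rightarrow> 'a) \<Rightarrow> 'a" where
  "adic_lim t s = (THE x. adic_conv t s x)"

definition adic_suminf :: "'a::ring_1 \<Rightarrow> (nat \<Rightarrow> 'a) \<Rightarrow> 'a" where
  "adic_suminf t f = adic_lim t (\<lambda>n. \<Sum>i<n. f i)"

definition texp :: "'a::real_algebra_1 \<Rightarrow> real \<Rightarrow> 'a \<Rightarrow> 'a" where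
  "texp t c X = adic_suminf t (\<lambda>n. (1 / fact n) *\<^sub>R (c *\<^sub>R (t * X)) ^ n)"

text \<open>expm1_t t X = (e^{tau X} - 1)/tau = \<Sum>_{n\<ge>1} tau^{n-1} X^n / n!.\<close>
definition expm1_t :: "'a::real_algebra_1 \<Rightarrow> 'a \<Rightarrow> 'a" where
  "expm1_t t X = adic_suminf t (\<lambda>n. (1 / fact (Suc n)) *\<^sub>R (t ^ n * X ^ Suc n))"

text \<open>onemexp_t t X = (1 - e^{-tau X})/tau = \<Sum>_{n\<ge>1} (-1)^{n+1} tau^{n-1} X^n / n!.\<close>
definition onemexp_t :: "'a::real_algebra_1 \<Rightarrow> 'a \<Rightarrow> 'a" where
  "onemexp_t t X = adic_suminf t (\<lambda>n. ((-1) ^ n / fact (Suc n)) *\<^sub>R (t ^ n * X ^ Suc n))"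

inductive_set adic_subalg :: "'a::real_algebra_1 \<Rightarrow> 'a set \<Rightarrow> 'a set" for t S where
  gen: "x \<in> S \<Longrightarrow> x \<in> adic_subalg t S"
| one: "1 \<in> adic_subalg t S"
| tau: "t \<in> adic_subalg t S"
| add: "x \<in> adic_subalg t S \<Longrightarrow> y \<in> adic_subalg t S \<Longrightarrow> x + y \<in> adic_subalg t S"
| mult: "x \<in> adic_subalg t S \<Longrightarrow> y \<in> adic_subalg t S \<Longrightarrow> x * y \<in> adic_subalg t S"
| scale: "x \<in> adic_subalg t S \<Longrightarrow> c *\<^sub>R x \<in> adic_subalg t S"
| limit: "(\<And>n. s n \<in> adic_subalg t S) \<Longrightarrow> adic_conv t s x \<Longrightarrow> x \<in> adic_subalg t S"

datatype 'a gens = Gens (gH: 'a) (gP: 'a) (gK: 'a) (gD: 'a) (gC1: 'a) (gC2: 'a)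

definition br :: "'a::ring \<Rightarrow> 'a \<Rightarrow> 'a" where
  "br x y = x * y - y * x"

definition gens_set :: "'a gens \<Rightarrow> 'a set" where
  "gens_set g = {gH g, gP g, gK g, gD g, gC1 g, gC2 g}"

definition so22_rels :: "'a::real_algebra_1 \<Rightarrow> 'a gens \<Rightarrow> bool" where
  "so22_rels t g \<longleftrightarrow>
    (let H = gH g; P = gP g; K = gK g; D = gD g; C1 = gC1 g; C2 = gC2 g in
      br K H = texp t (-1) H * P
    \<and> br K P = expm1_t t H
    \<and> br H P = 0
    \<and> br D H = onemexp_t t H
    \<and> br D C1 = - C1 + t * D\<^sup>2
    \<and> br H C1 = - 2 * D
    \<and> br D P = P
    \<and> br D C2 = - C2
    \<and> br P C2 = 2 * D
    \<and> br K C1 = C2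
    \<and> br K C2 = C1 - t * D\<^sup>2
    \<and> br C1 C2 = - t * (D * C2 + C2 * D)
    \<and> br H C2 = texp t (-1) H * K + K * texp t (-1) H
    \<and> br P C1 = - 2 * K - t * (D * P + P * D)
    \<and> br K D = 0)"

definition so22_classical_rels :: "'a::real_algebra_1 gens \<Rightarrow> bool" where
  "so22_classical_rels g \<longleftrightarrow>
    (let H = gH g; P = gP g; K = gK g; D = gD g; C1 = gC1 g; C2 = gC2 g in
      br K H = P
    \<and> br K P = H
    \<and> br H P = 0
    \<and> br D H = H
    \<and> br D C1 = - C1
    \<and> br H C1 = - 2 * D
    \<and> br D P = P
    \<and> br D C2 = - C2
    \<and> br P C2 = 2 * D
    \<and> br K C1 = C2
    \<and> br K C2 = C1
    \<and> br C1 C2 = 0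
    \<and> br H C2 = 2 * K
    \<and> br P C1 = - 2 * K
    \<and> br K D = 0)"

text \<open>Two copies of the generators commute elementwise (as X \<otimes> 1 and 1 \<otimes> Y do).\<close>
definition gens_commute :: "'a::ring gens \<Rightarrow> 'a gens \<Rightarrow> bool" where
  "gens_commute g1 g2 \<longleftrightarrow> (\<forall>x\<in>gens_set g1. \<forall>y\<in>gens_set g2. x * y = y * x)"

text \<open>The coproduct: g1 plays the role of X \<otimes> 1 and g2 the role of 1 \<otimes> X.\<close>
definition so22_delta :: "'a::real_algebra_1 \<Rightarrow> 'a gens \<Rightarrow> 'a gens \<Rightarrow> 'a gens" where
  "so22_delta t g1 g2 =
    (let H1 = gH g1; P1 = gP g1; K1 = gK g1; D1 = gD g1; C11 = gC1 g1; C21 = gC2 g1;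
         H2 = gH g2; P2 = gP g2; K2 = gK g2; D2 = gD g2; C12 = gC1 g2; C22 = gC2 g2 in
     Gens
       (H2 + H1)
       (P2 + P1 * texp t 1 H2)
       (K2 + K1 - t * (D1 * (texp t (-1) H2 * P2)))
       (D2 + D1 * texp t (-1) H2)
       (C12 + C11 * texp t (-1) H2)
       (C22 + C21 * texp t (-1) H2 + 2 * t * (D1 * (texp t (-1) H2 * K2))
          - t\<^sup>2 * ((D1 * (D1 + 1)) * (texp t (-2) H2 * P2))))"

end

theory Submission
  imports Defs
begin



lemma scaleR_power': "(c *\<^sub>R (x::'a::real_algebra_1)) ^ n = (c ^ n) *\<^sub>R (x ^ n)"
  by (induct n) (simp_all add: mult_scaleR_left mult_scaleR_right)

lemma comm_power: "(x::'a::ring_1) * y = y * x \<Longrightarrow> (x * y) ^ n = x ^ n * y ^ n"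
proof (induct n)
  case (Suc n)
  have "y ^ n * x = x * y ^ n" using power_commuting_commutes[of y x n] Suc.prems by simp
  then have "y ^ n * (x * y) = x * (y ^ n * y)" by (metis mult.assoc)
  have "(x * y) ^ Suc n = x ^ n * y ^ n * (x * y)" using Suc.hyps Suc.prems by (simp only: power_Suc2)
  also have "\<dots> = x ^ n * (y ^ n * (x * y))" by (simp only: mult.assoc)
  also have "\<dots> = (x ^ n * x) * (y ^ n * y)" using \<open>y ^ n * (x * y) = x * (y ^ n * y)\<close> by (simp only: mult.assoc)
  finally show ?case by (simp only: power_Suc2)
qed simp

locale adic =
  fixes t :: "'a::real_algebra_1"
  assumes ok: "adic_ok t"
begin

lemma central: "t * y = y * t" using ok by (simp add: adic_ok_def)
lemma central_pow: "t ^ k * y = y * t ^ k"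
  by (simp add: power_commuting_commutes central)
lemma separated: "(\<And>k. adic_div t k x) \<Longrightarrow> x = 0" using ok by (simp add: adic_ok_def)
lemma complete: "adic_cauchy t s \<Longrightarrow> \<exists>x. adic_conv t s x" using ok by (simp add: adic_ok_def)

lemma div_0[simp]: "adic_div t k 0" unfolding adic_div_def by (rule exI[of _ 0]) simp
lemma div_add: "adic_div t k x \<Longrightarrow> adic_div t k y \<Longrightarrow> adic_div t k (x + y)"
  unfolding adic_div_def by (metis distrib_left)
lemma div_minus: "adic_div t k x \<Longrightarrow> adic_div t k (- x)"
  unfolding adic_div_def by (metis mult_minus_right)
lemma div_diff: "adic_div t k x \<Longrightarrow> adic_div t k y \<Longrightarrow> adic_div t k (x - y)"
  by (metis div_add div_minus diff_conv_add_uminus)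
lemma div_mult_right: "adic_div t k x \<Longrightarrow> adic_div t k (x * z)"
  unfolding adic_div_def by (metis mult.assoc)
lemma div_mult_left: "adic_div t k x \<Longrightarrow> adic_div t k (z * x)"
  unfolding adic_div_def by (metis mult.assoc central_pow)
lemma div_scaleR: "adic_div t k x \<Longrightarrow> adic_div t k (c *\<^sub>R x)"
  unfolding adic_div_def by (metis mult_scaleR_right)
lemma div_mono: "adic_div t m x \<Longrightarrow> k \<le> m \<Longrightarrow> adic_div t k x"
proof -
  assume "adic_div t m x" "k \<le> m"
  then obtain y where "x = t ^ m * y" unfolding adic_div_def by blast
  also have "t ^ m = t ^ k * t ^ (m - k)" using \<open>k \<le> m\<close> by (simp flip: power_add)
  finally show ?thesis unfolding adic_div_def by (auto simp: mult.assoc)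
qed
lemma div_pow: "k \<le> m \<Longrightarrow> adic_div t k (t ^ m * y)"
  by (rule div_mono[of m]) (auto simp: adic_div_def)
lemma div_sum: "(\<And>i. i \<in> A \<Longrightarrow> adic_div t k (f i)) \<Longrightarrow> adic_div t k (sum f A)"
  by (induct A rule: infinite_finite_induct) (auto intro: div_add)
lemma div_prod: "adic_div t i x \<Longrightarrow> adic_div t j y \<Longrightarrow> adic_div t (i + j) (x * y)"
  unfolding adic_div_def by (metis mult.assoc central_pow power_add)

lemma conv_unique: "adic_conv t s x \<Longrightarrow> adic_conv t s y \<Longrightarrow> x = y"
proof -
  assume a: "adic_conv t s x" "adic_conv t s y"
  have "adic_div t k (x - y)" for k
  proof -
    obtain N1 where 1: "\<forall>n\<ge>N1. adic_div t k (x - s n)" using a(1) unfolding adic_conv_def by blast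
    obtain N2 where 2: "\<forall>n\<ge>N2. adic_div t k (y - s n)" using a(2) unfolding adic_conv_def by blast
    have "x - y = (x - s (N1 + N2)) - (y - s (N1 + N2))" by simp
    then show ?thesis using 1 2 by (metis div_diff le_add1 le_add2)
  qed
  then have "x - y = 0" by (rule separated)
  then show "x = y" by simp
qed

lemma conv_lim: "adic_conv t s x \<Longrightarrow> adic_lim t s = x"
  unfolding adic_lim_def using conv_unique by blast

lemma conv_const: "adic_conv t (\<lambda>n. x) x" unfolding adic_conv_def by simp

lemma conv_add: "adic_conv t s x \<Longrightarrow> adic_conv t u y \<Longrightarrow> adic_conv t (\<lambda>n. s n + u n) (x + y)"
  unfolding adic_conv_def
proof (intro allI)
  fix k assume a: "\<forall>k. \<exists>N. \<forall>n\<ge>N. adic_div t k (x - s n)" "\<forall>k. \<exists>N. \<forall>n\<ge>N. adic_div t k (y - u n)"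
  obtain N1 where 1: "\<forall>n\<ge>N1. adic_div t k (x - s n)" using a(1) by blast
  obtain N2 where 2: "\<forall>n\<ge>N2. adic_div t k (y - u n)" using a(2) by blast
  have "\<forall>n\<ge>N1 + N2. adic_div t k (x + y - (s n + u n))"
  proof (intro allI impI)
    fix n assume "n \<ge> N1 + N2"
    then have "adic_div t k ((x - s n) + (y - u n))" using 1 2 by (auto intro: div_add)
    then show "adic_div t k (x + y - (s n + u n))" by (simp add: algebra_simps)
  qed
  then show "\<exists>N. \<forall>n\<ge>N. adic_div t k (x + y - (s n + u n))" by blast
qed

lemma conv_minus: "adic_conv t s x \<Longrightarrow> adic_conv t (\<lambda>n. - s n) (- x)"
  unfolding adic_conv_def
proof (intro allI)
  fix k assume "\<forall>k. \<exists>N. \<forall>n\<ge>N. adic_div t k (x - s n)"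
  then obtain N where "\<forall>n\<ge>N. adic_div t k (x - s n)" by blast
  then have "\<forall>n\<ge>N. adic_div t k (- (x - s n))" using div_minus by blast
  then have "\<forall>n\<ge>N. adic_div t k (- x - - s n)" by simp
  then show "\<exists>N. \<forall>n\<ge>N. adic_div t k (- x - - s n)" by blast
qed

lemma conv_diff: "adic_conv t s x \<Longrightarrow> adic_conv t u y \<Longrightarrow> adic_conv t (\<lambda>n. s n - u n) (x - y)"
proof -
  assume a: "adic_conv t s x" and b: "adic_conv t u y"
  have "adic_conv t (\<lambda>n. s n + - u n) (x + - y)" by (rule conv_add[OF a conv_minus[OF b]])
  then show ?thesis by (simp only: diff_conv_add_uminus)
qed

lemma conv_mult: "adic_conv t s x \<Longrightarrow> adic_conv t u y \<Longrightarrow> adic_conv t (\<lambda>n. s n * u n) (x * y)"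
  unfolding adic_conv_def
proof (intro allI)
  fix k assume a: "\<forall>k. \<exists>N. \<forall>n\<ge>N. adic_div t k (x - s n)" "\<forall>k. \<exists>N. \<forall>n\<ge>N. adic_div t k (y - u n)"
  obtain N1 where 1: "\<forall>n\<ge>N1. adic_div t k (x - s n)" using a(1) by blast
  obtain N2 where 2: "\<forall>n\<ge>N2. adic_div t k (y - u n)" using a(2) by blast
  have "\<forall>n\<ge>N1 + N2. adic_div t k (x * y - s n * u n)"
  proof (intro allI impI)
    fix n assume "n \<ge> N1 + N2"
    then have "adic_div t k (x * (y - u n))" "adic_div t k ((x - s n) * u n)" using 1 2
      by (auto intro: div_mult_left div_mult_right)
    then have "adic_div t k (x * (y - u n) + (x - s n) * u n)" by (rule div_add)
    then show "adic_div t k (x * y - s n * u n)" by (simp add: algebra_simps)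
  qed
  then show "\<exists>N. \<forall>n\<ge>N. adic_div t k (x * y - s n * u n)" by blast
qed

lemma conv_scaleR: "adic_conv t s x \<Longrightarrow> adic_conv t (\<lambda>n. c *\<^sub>R s n) (c *\<^sub>R x)"
  unfolding adic_conv_def
proof (intro allI)
  fix k assume "\<forall>k. \<exists>N. \<forall>n\<ge>N. adic_div t k (x - s n)"
  then obtain N where "\<forall>n\<ge>N. adic_div t k (x - s n)" by blast
  then have "\<forall>n\<ge>N. adic_div t k (c *\<^sub>R (x - s n))" using div_scaleR by blast
  then have "\<forall>n\<ge>N. adic_div t k (c *\<^sub>R x - c *\<^sub>R s n)" by (simp add: scaleR_right_diff_distrib)
  then show "\<exists>N. \<forall>n\<ge>N. adic_div t k (c *\<^sub>R x - c *\<^sub>R s n)" by blast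
qed

lemma conv_close: "adic_conv t s x \<Longrightarrow> (\<And>n. adic_div t n (s n - u n)) \<Longrightarrow> adic_conv t u x"
  unfolding adic_conv_def
proof (intro allI)
  fix k assume a: "\<forall>k. \<exists>N. \<forall>n\<ge>N. adic_div t k (x - s n)" and b: "\<And>n. adic_div t n (s n - u n)"
  obtain N1 where 1: "\<forall>n\<ge>N1. adic_div t k (x - s n)" using a by blast
  have "\<forall>n\<ge>N1 + k. adic_div t k (x - u n)"
  proof (intro allI impI)
    fix n assume n: "n \<ge> N1 + k"
    have "adic_div t k (s n - u n)" using div_mono[OF b[of n]] n by auto
    moreover have "adic_div t k (x - s n)" using 1 n by auto
    ultimately have "adic_div t k ((x - s n) + (s n - u n))" using div_add by blast
    moreover have "(x - s n) + (s n - u n) = x - u n" by simp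
    ultimately show "adic_div t k (x - u n)" by metis
  qed
  then show "\<exists>N. \<forall>n\<ge>N. adic_div t k (x - u n)" by blast
qed

lemma conv_shift: "adic_conv t s x \<Longrightarrow> adic_conv t (\<lambda>n. s (n + m)) x"
  unfolding adic_conv_def
proof (intro allI)
  fix k assume "\<forall>k. \<exists>N. \<forall>n\<ge>N. adic_div t k (x - s n)"
  then obtain N where "\<forall>n\<ge>N. adic_div t k (x - s n)" by blast
  then have "\<forall>n\<ge>N. adic_div t k (x - s (n + m))" by simp
  then show "\<exists>N. \<forall>n\<ge>N. adic_div t k (x - s (n + m))" by blast
qed

lemma conv_eq: "adic_conv t s x \<Longrightarrow> (\<And>n. s n = u n) \<Longrightarrow> adic_conv t u x"
proof -
  assume "adic_conv t s x" "\<And>n. s n = u n"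
  moreover then have "s = u" by auto
  ultimately show ?thesis by simp
qed

definition psum :: "(nat \<Rightarrow> 'a) \<Rightarrow> nat \<Rightarrow> 'a" where "psum f n = (\<Sum>i<n. f i)"

lemma conv_series:
  assumes f: "\<And>n. adic_div t n (f n)"
  shows "adic_conv t (psum f) (adic_suminf t f)"
proof -
  have "adic_cauchy t (psum f)" unfolding adic_cauchy_def
  proof (intro allI)
    fix k :: nat
    have g: "\<And>a b. a \<ge> k \<Longrightarrow> b \<ge> a \<Longrightarrow> adic_div t k (psum f b - psum f a)"
    proof -
      fix a b :: nat assume ab: "a \<ge> k" "b \<ge> a"
      have "psum f b - psum f a = sum f {a..<b}" unfolding psum_def
        using ab sum.atLeastLessThan_concat[of 0 a b f] by (simp add: lessThan_atLeast0 algebra_simps)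
      moreover have "adic_div t k (sum f {a..<b})"
        using ab by (auto intro!: div_sum intro: div_mono[OF f])
      ultimately show "adic_div t k (psum f b - psum f a)" by simp
    qed
    show "\<exists>N. \<forall>m\<ge>N. \<forall>n\<ge>N. adic_div t k (psum f m - psum f n)"
    proof (intro exI[of _ k] allI impI)
      fix m n :: nat assume mn: "k \<le> m" "k \<le> n"
      show "adic_div t k (psum f m - psum f n)"
      proof (cases "m \<ge> n")
        case True then show ?thesis using g mn by auto
      next
        case False
        then have "adic_div t k (psum f n - psum f m)" using g mn by auto
        then have "adic_div t k (- (psum f n - psum f m))" by (rule div_minus)
        then show ?thesis by simp
      qed
    qed
  qed
  then obtain x where "adic_conv t (psum f) x" using complete by blast
  moreover then have "adic_suminf t f = x" unfolding adic_suminf_def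
    using conv_lim by (simp add: psum_def[abs_def])
  ultimately show ?thesis by simp
qed

end



lemma binom_comm:
  fixes X Y :: "'a::ring_1"
  assumes c: "X * Y = Y * X"
  shows "(X + Y) ^ n = (\<Sum>k\<le>n. of_nat (n choose k) * (X ^ k * Y ^ (n - k)))"
proof (induct n)
  case 0 then show ?case by simp
next
  case (Suc n)
  define T where "T k = X ^ k * Y ^ (Suc n - k)" for k
  have yx: "Y * X ^ k = X ^ k * Y" for k using power_commuting_commutes[of X Y k] c by simp
  have 1: "X * (of_nat m * (X ^ k * Y ^ j)) = of_nat m * (X ^ Suc k * Y ^ j)" for m k j
    by (simp add: mult_of_nat_commute mult.assoc flip: mult.assoc[of X "of_nat m"])
  have 2: "Y * (of_nat m * (X ^ k * Y ^ j)) = of_nat m * (X ^ k * Y ^ Suc j)" for m k j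
  proof -
    have "Y * (of_nat m * (X ^ k * Y ^ j)) = of_nat m * ((Y * X ^ k) * Y ^ j)"
      by (metis mult.assoc mult_of_nat_commute)
    also have "\<dots> = of_nat m * (X ^ k * Y ^ Suc j)" by (simp add: yx mult.assoc)
    finally show ?thesis .
  qed
  have "(X + Y) ^ Suc n = (X + Y) * (\<Sum>k\<le>n. of_nat (n choose k) * (X ^ k * Y ^ (n - k)))"
    using Suc by simp
  also have "\<dots> = (\<Sum>k\<le>n. of_nat (n choose k) * T (Suc k)) + (\<Sum>k\<le>n. of_nat (n choose k) * T k)"
  proof -
    have "X * (\<Sum>k\<le>n. of_nat (n choose k) * (X ^ k * Y ^ (n - k))) = (\<Sum>k\<le>n. of_nat (n choose k) * T (Suc k))"
      by (simp add: sum_distrib_left 1 T_def)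
    moreover have "Y * (\<Sum>k\<le>n. of_nat (n choose k) * (X ^ k * Y ^ (n - k))) = (\<Sum>k\<le>n. of_nat (n choose k) * T k)"
      by (auto simp add: sum_distrib_left 2 T_def Suc_diff_le intro!: sum.cong)
    ultimately show ?thesis by (simp add: distrib_right)
  qed
  also have "(\<Sum>k\<le>n. of_nat (n choose k) * T k) = (\<Sum>k\<le>Suc n. of_nat (n choose k) * T k)"
    by (simp add: binomial_eq_0)
  also have "(\<Sum>k\<le>n. of_nat (n choose k) * T (Suc k)) =
      (\<Sum>k\<le>Suc n. (if k = 0 then 0 else of_nat (n choose (k - 1))) * T k)"
    by (simp add: sum.atMost_Suc_shift del: sum.atMost_Suc)
  also have "(\<Sum>k\<le>Suc n. (if k = 0 then 0 else of_nat (n choose (k - 1))) * T k) +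
      (\<Sum>k\<le>Suc n. of_nat (n choose k) * T k) = (\<Sum>k\<le>Suc n. of_nat (Suc n choose k) * T k)"
  proof -
    have "of_nat (Suc n choose k) * T k = (if k = 0 then 0 else of_nat (n choose (k - 1))) * T k + of_nat (n choose k) * T k" for k
      by (cases k) (simp_all add: distrib_right)
    then show ?thesis by (simp add: sum.distrib[symmetric])
  qed
  finally have "(X + Y) ^ Suc n = (\<Sum>k\<le>Suc n. of_nat (Suc n choose k) * T k)" .
  then show ?case by (simp add: T_def)
qed

lemma of_nat_scaleR: "(of_nat m :: 'a::real_algebra_1) * Z = real m *\<^sub>R Z"
  by (simp add: scaleR_conv_of_real)

context adic begin

lemma psum_conv_lim: "(\<And>n. adic_div t n (f n)) \<Longrightarrow> adic_conv t u x \<Longrightarrow> (\<And>n. psum f n = u n) \<Longrightarrow> adic_suminf t f = x"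
  by (metis conv_eq conv_series conv_unique)

lemma series_commute:
  assumes f: "\<And>n. adic_div t n (f n)" and z: "\<And>n. Z * f n = f n * Z"
  shows "Z * adic_suminf t f = adic_suminf t f * Z"
proof -
  have c: "adic_conv t (psum f) (adic_suminf t f)" by (rule conv_series[OF f])
  have 1: "adic_conv t (\<lambda>n. Z * psum f n) (Z * adic_suminf t f)" by (rule conv_mult[OF conv_const c])
  have 2: "adic_conv t (\<lambda>n. psum f n * Z) (adic_suminf t f * Z)" by (rule conv_mult[OF c conv_const])
  have "Z * psum f n = psum f n * Z" for n unfolding psum_def
    by (simp add: sum_distrib_left sum_distrib_right z)
  then show ?thesis using 1 2 conv_unique conv_eq by metis
qed

lemma suminf_add:
  assumes f: "\<And>n. adic_div t n (f n)" and g: "\<And>n. adic_div t n (g n)"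
  shows "adic_suminf t (\<lambda>n. f n + g n) = adic_suminf t f + adic_suminf t g"
proof (rule psum_conv_lim)
  show "adic_div t n (f n + g n)" for n using f g by (rule div_add)
  show "adic_conv t (\<lambda>n. psum f n + psum g n) (adic_suminf t f + adic_suminf t g)"
    by (rule conv_add[OF conv_series[OF f] conv_series[OF g]])
  show "psum (\<lambda>n. f n + g n) n = psum f n + psum g n" for n by (simp add: psum_def sum.distrib)
qed

lemma cauchy_prod:
  assumes f: "\<And>n. adic_div t n (f n)" and g: "\<And>n. adic_div t n (g n)"
  shows "adic_suminf t f * adic_suminf t g = adic_suminf t (\<lambda>n. \<Sum>i\<le>n. f i * g (n - i))"
proof -
  define h where "h n = (\<Sum>i\<le>n. f i * g (n - i))" for n
  have fg: "adic_div t (i + j) (f i * g j)" for i j by (rule div_prod[OF f g])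
  have h: "adic_div t n (h n)" for n unfolding h_def
    by (rule div_sum) (metis fg le_add_diff_inverse atMost_iff)
  have c: "adic_conv t (\<lambda>n. psum f n * psum g n) (adic_suminf t f * adic_suminf t g)"
    by (rule conv_mult[OF conv_series[OF f] conv_series[OF g]])
  have d: "adic_div t N (psum f N * psum g N - psum h N)" for N
  proof -
    define Sq where "Sq = {..<N} \<times> {..<N}"
    define Tr where "Tr = {(i,j). i + j < N}"
    have fin: "finite Sq" unfolding Sq_def by simp
    have sub: "Tr \<subseteq> Sq" unfolding Tr_def Sq_def by auto
    have 1: "psum f N * psum g N = (\<Sum>(i,j)\<in>Sq. f i * g j)"
      unfolding psum_def Sq_def by (simp add: sum_product sum.cartesian_product)
    have 2: "psum h N = (\<Sum>(i,j)\<in>Tr. f i * g j)"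
      unfolding psum_def h_def Tr_def by (simp add: sum.triangle_reindex)
    have 3: "(\<Sum>(i,j)\<in>Sq. f i * g j) = (\<Sum>(i,j)\<in>Sq - Tr. f i * g j) + (\<Sum>(i,j)\<in>Tr. f i * g j)"
      by (rule sum.subset_diff[OF sub fin])
    have 4: "adic_div t N (\<Sum>(i,j)\<in>Sq - Tr. f i * g j)"
    proof (rule div_sum)
      fix p assume "p \<in> Sq - Tr"
      then obtain i j where p: "p = (i, j)" "i + j \<ge> N" unfolding Tr_def by force
      then show "adic_div t N (case p of (i, j) \<Rightarrow> f i * g j)" using div_mono[OF fg] by simp
    qed
    show ?thesis using 1 2 3 4 by simp
  qed
  have "adic_conv t (psum h) (adic_suminf t f * adic_suminf t g)"
    by (rule conv_close[OF c d])
  then show ?thesis unfolding h_def[symmetric] using conv_series[OF h] conv_unique by metis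
qed

lemma texp_pser: "texp t c X = adic_suminf t (\<lambda>n. (c ^ n / fact n) *\<^sub>R (t ^ n * X ^ n))"
proof -
  have "(1 / fact n) *\<^sub>R (c *\<^sub>R (t * X)) ^ n = (c ^ n / fact n) *\<^sub>R (t ^ n * X ^ n)" for n
    by (simp add: scaleR_power' comm_power[OF central])
  then show ?thesis unfolding texp_def by simp
qed

lemma pser_div: "adic_div t n (a *\<^sub>R (t ^ n * Y))"
  by (rule div_scaleR) (auto simp: adic_div_def)

lemma texp_add:
  assumes c: "X * Y = Y * X"
  shows "texp t c (X + Y) = texp t c X * texp t c Y"
proof -
  have "texp t c X * texp t c Y = adic_suminf t (\<lambda>n. \<Sum>i\<le>n. ((c ^ i / fact i) *\<^sub>R (t ^ i * X ^ i)) *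
      ((c ^ (n - i) / fact (n - i)) *\<^sub>R (t ^ (n - i) * Y ^ (n - i))))"
    unfolding texp_pser by (rule cauchy_prod[OF pser_div pser_div])
  also have "\<dots> = texp t c (X + Y)" unfolding texp_pser
  proof (rule arg_cong[where f="adic_suminf t"], rule ext)
    fix n
    have "(c ^ n / fact n) *\<^sub>R (t ^ n * (X + Y) ^ n) =
        (\<Sum>i\<le>n. (c ^ n / fact n * of_nat (n choose i)) *\<^sub>R (t ^ n * (X ^ i * Y ^ (n - i))))"
    proof -
      have "t ^ n * (of_nat (n choose i) * (X ^ i * Y ^ (n - i))) = real (n choose i) *\<^sub>R (t ^ n * (X ^ i * Y ^ (n - i)))" for i
        by (simp only: of_nat_scaleR mult_scaleR_right)
      then show ?thesis
        by (simp add: binom_comm[OF c] sum_distrib_left scaleR_sum_right)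
    qed
    also have "\<dots> = (\<Sum>i\<le>n. ((c ^ i / fact i) *\<^sub>R (t ^ i * X ^ i)) *
      ((c ^ (n - i) / fact (n - i)) *\<^sub>R (t ^ (n - i) * Y ^ (n - i))))"
    proof (rule sum.cong[OF refl])
      fix i assume "i \<in> {..n}"
      then have i: "i \<le> n" by simp
      have "c ^ n / fact n * of_nat (n choose i) = (c ^ i / fact i) * (c ^ (n - i) / fact (n - i))"
        using i by (simp add: binomial_fact power_add[symmetric])
      moreover have "t ^ i * X ^ i * (t ^ (n - i) * Y ^ (n - i)) = t ^ n * (X ^ i * Y ^ (n - i))"
      proof -
        have "t ^ i * X ^ i * (t ^ (n - i) * Y ^ (n - i)) = t ^ i * (X ^ i * t ^ (n - i)) * Y ^ (n - i)"
          by (simp only: mult.assoc)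
        also have "\<dots> = (t ^ i * t ^ (n - i)) * (X ^ i * Y ^ (n - i))"
          by (simp only: central_pow[of "n - i" "X ^ i", symmetric] mult.assoc)
        also have "\<dots> = t ^ n * (X ^ i * Y ^ (n - i))" using i by (simp flip: power_add)
        finally show ?thesis .
      qed
      ultimately show "(c ^ n / fact n * of_nat (n choose i)) *\<^sub>R (t ^ n * (X ^ i * Y ^ (n - i))) =
          ((c ^ i / fact i) *\<^sub>R (t ^ i * X ^ i)) * ((c ^ (n - i) / fact (n - i)) *\<^sub>R (t ^ (n - i) * Y ^ (n - i)))"
        by (simp only: mult_scaleR_left mult_scaleR_right scaleR_scaleR) (simp add: mult.commute)
    qed
    finally show "(\<Sum>i\<le>n. ((c ^ i / fact i) *\<^sub>R (t ^ i * X ^ i)) *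
      ((c ^ (n - i) / fact (n - i)) *\<^sub>R (t ^ (n - i) * Y ^ (n - i)))) = (c ^ n / fact n) *\<^sub>R (t ^ n * (X + Y) ^ n)" by simp
  qed
  finally show ?thesis by simp
qed


lemma div_zero_any[simp]: "adic_div t 0 x" by (simp add: adic_div_def)

lemma texp_scale: "texp t c X = texp t 1 (c *\<^sub>R X)"
  unfolding texp_def by simp

lemma texp_mult: "texp t a X * texp t b X = texp t (a + b) X"
proof -
  have c: "(a *\<^sub>R X) * (b *\<^sub>R X) = (b *\<^sub>R X) * (a *\<^sub>R X)" by (simp add: mult.commute)
  have "texp t a X * texp t b X = texp t 1 (a *\<^sub>R X + b *\<^sub>R X)"
    by (simp add: texp_scale[of a] texp_scale[of b] texp_add[OF c])
  also have "\<dots> = texp t (a + b) X" by (simp add: texp_scale[of "a + b"] scaleR_left_distrib)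
  finally show ?thesis .
qed

lemma texp_zero: "texp t 0 X = 1"
proof -
  let ?f = "\<lambda>n. ((0::real) ^ n / fact n) *\<^sub>R (t ^ n * X ^ n)"
  have d: "adic_div t n (1 - psum ?f n)" for n
  proof (cases n)
    case (Suc m)
    have "psum ?f (Suc m) = 1" unfolding psum_def by (simp add: sum.lessThan_Suc_shift del: sum.lessThan_Suc)
    then show ?thesis using Suc by simp
  qed simp
  have "adic_conv t (psum ?f) 1" by (rule conv_close[OF conv_const d])
  then show ?thesis unfolding texp_pser using conv_series[OF pser_div] conv_unique by metis
qed

lemma commute_pow_term: "Z * X = X * Z \<Longrightarrow> Z * (a *\<^sub>R (t ^ n * X ^ m)) = (a *\<^sub>R (t ^ n * X ^ m)) * Z"
proof -
  assume zx: "Z * X = X * Z"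
  have 1: "Z * X ^ m = X ^ m * Z" using power_commuting_commutes[of X Z m] zx by simp
  have "Z * (t ^ n * X ^ m) = t ^ n * (Z * X ^ m)" by (metis central_pow mult.assoc)
  also have "\<dots> = (t ^ n * X ^ m) * Z" by (simp add: 1 mult.assoc)
  finally show ?thesis by (simp add: mult_scaleR_right mult_scaleR_left)
qed

lemma texp_commute: "Z * X = X * Z \<Longrightarrow> Z * texp t c X = texp t c X * Z"
  unfolding texp_pser by (rule series_commute[OF pser_div commute_pow_term])

definition sexp :: "real \<Rightarrow> 'a \<Rightarrow> 'a" where
  "sexp c X = adic_suminf t (\<lambda>n. (c ^ n / fact (Suc n)) *\<^sub>R (t ^ n * X ^ Suc n))"

lemma expm1_sexp: "expm1_t t X = sexp 1 X" unfolding expm1_t_def sexp_def by simp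
lemma onemexp_sexp: "onemexp_t t X = sexp (-1) X" unfolding onemexp_t_def sexp_def by simp

lemma sexp_commute: "Z * X = X * Z \<Longrightarrow> Z * sexp c X = sexp c X * Z"
  unfolding sexp_def by (rule series_commute[OF pser_div commute_pow_term])

lemma sexp_t: "c *\<^sub>R (t * sexp c X) = texp t c X - 1"
proof -
  let ?f = "\<lambda>n. (c ^ n / fact (Suc n)) *\<^sub>R (t ^ n * X ^ Suc n)"
  let ?g = "\<lambda>n. (c ^ n / fact n) *\<^sub>R (t ^ n * X ^ n)"
  have 1: "adic_conv t (\<lambda>n. c *\<^sub>R (t * psum ?f n)) (c *\<^sub>R (t * sexp c X))"
    unfolding sexp_def by (rule conv_scaleR[OF conv_mult[OF conv_const conv_series[OF pser_div]]])
  have 2: "adic_conv t (\<lambda>n. psum ?g (n + 1) - 1) (texp t c X - 1)"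
    unfolding texp_pser by (rule conv_diff[OF conv_shift[OF conv_series[OF pser_div]] conv_const])
  have eqn: "c *\<^sub>R (t * psum ?f n) = psum ?g (n + 1) - 1" for n
  proof -
    have e: "c *\<^sub>R (t * ?f i) = ?g (Suc i)" for i
      by (simp add: mult_scaleR_right mult.assoc)
    have "c *\<^sub>R (t * psum ?f n) = (\<Sum>i<n. ?g (Suc i))"
      unfolding psum_def sum_distrib_left scaleR_sum_right e ..
    moreover have "psum ?g (n + 1) = ?g 0 + (\<Sum>i<n. ?g (Suc i))"
      unfolding psum_def Suc_eq_plus1[symmetric] by (rule sum.lessThan_Suc_shift)
    moreover have "?g 0 = 1" by simp
    ultimately show ?thesis by (simp only: add_diff_cancel_left')
  qed
  have "adic_conv t (\<lambda>n. c *\<^sub>R (t * psum ?f n)) (texp t c X - 1)"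
    by (rule conv_eq[OF 2], rule eqn[symmetric])
  then show ?thesis using 1 conv_unique by blast
qed


lemma sexp_add:
  assumes c: "X * Y = Y * X"
  shows "sexp c (X + Y) = sexp c X + texp t c X * sexp c Y"
proof -
  let ?f = "\<lambda>n. (c ^ n / fact (Suc n)) *\<^sub>R (t ^ n * X ^ Suc n)"
  let ?p = "\<lambda>n. \<Sum>i\<le>n. ((c ^ i / fact i) *\<^sub>R (t ^ i * X ^ i)) *
      ((c ^ (n - i) / fact (Suc (n - i))) *\<^sub>R (t ^ (n - i) * Y ^ Suc (n - i)))"
  have pd: "adic_div t n (?p n)" for n
  proof -
    have "adic_div t (i + (n - i)) (((c ^ i / fact i) *\<^sub>R (t ^ i * X ^ i)) *
      ((c ^ (n - i) / fact (Suc (n - i))) *\<^sub>R (t ^ (n - i) * Y ^ Suc (n - i))))" for i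
      by (rule div_prod[OF pser_div pser_div])
    then show ?thesis by (intro div_sum) (metis atMost_iff le_add_diff_inverse)
  qed
  have 1: "texp t c X * sexp c Y = adic_suminf t ?p"
    unfolding texp_pser sexp_def by (rule cauchy_prod[OF pser_div pser_div])
  have 2: "sexp c X + adic_suminf t ?p = adic_suminf t (\<lambda>n. ?f n + ?p n)"
    unfolding sexp_def by (rule suminf_add[OF pser_div pd, symmetric])
  have 3: "(c ^ n / fact (Suc n)) *\<^sub>R (t ^ n * (X + Y) ^ Suc n) = ?f n + ?p n" for n
  proof -
    have b: "(c ^ n / fact (Suc n)) *\<^sub>R (t ^ n * (X + Y) ^ Suc n) =
        (\<Sum>i\<le>Suc n. (c ^ n / fact (Suc n) * real (Suc n choose i)) *\<^sub>R (t ^ n * (X ^ i * Y ^ (Suc n - i))))"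
    proof -
      have "t ^ n * (of_nat (Suc n choose i) * (X ^ i * Y ^ (Suc n - i))) = real (Suc n choose i) *\<^sub>R (t ^ n * (X ^ i * Y ^ (Suc n - i)))" for i
        by (simp only: of_nat_scaleR mult_scaleR_right)
      then show ?thesis
        unfolding binom_comm[OF c, of "Suc n"] sum_distrib_left scaleR_sum_right
        by (simp only: scaleR_scaleR)
    qed
    also have "\<dots> = ?f n + (\<Sum>i\<le>n. (c ^ n / fact (Suc n) * real (Suc n choose i)) *\<^sub>R (t ^ n * (X ^ i * Y ^ (Suc n - i))))"
      by (simp add: add.commute)
    also have "(\<Sum>i\<le>n. (c ^ n / fact (Suc n) * real (Suc n choose i)) *\<^sub>R (t ^ n * (X ^ i * Y ^ (Suc n - i)))) = ?p n"
    proof (rule sum.cong[OF refl])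
      fix i assume "i \<in> {..n}"
      then have i: "i \<le> n" by simp
      have "c ^ n / fact (Suc n) * real (Suc n choose i) = (c ^ i / fact i) * (c ^ (n - i) / fact (Suc (n - i)))"
        using i by (simp add: binomial_fact power_add[symmetric] Suc_diff_le)
      moreover have "t ^ i * X ^ i * (t ^ (n - i) * Y ^ Suc (n - i)) = t ^ n * (X ^ i * Y ^ (Suc n - i))"
      proof -
        have "t ^ i * X ^ i * (t ^ (n - i) * Y ^ Suc (n - i)) = t ^ i * (X ^ i * t ^ (n - i)) * Y ^ Suc (n - i)"
          by (simp only: mult.assoc)
        also have "\<dots> = (t ^ i * t ^ (n - i)) * (X ^ i * Y ^ Suc (n - i))"
          by (simp only: central_pow[of "n - i" "X ^ i", symmetric] mult.assoc)
        also have "\<dots> = t ^ n * (X ^ i * Y ^ (Suc n - i))" using i by (simp add: Suc_diff_le flip: power_add)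
        finally show ?thesis .
      qed
      ultimately show "(c ^ n / fact (Suc n) * real (Suc n choose i)) *\<^sub>R (t ^ n * (X ^ i * Y ^ (Suc n - i))) =
          ((c ^ i / fact i) *\<^sub>R (t ^ i * X ^ i)) * ((c ^ (n - i) / fact (Suc (n - i))) *\<^sub>R (t ^ (n - i) * Y ^ Suc (n - i)))"
        by (simp only: mult_scaleR_left mult_scaleR_right scaleR_scaleR) (simp add: mult.commute)
    qed
    finally show ?thesis .
  qed
  show ?thesis unfolding 1 2 unfolding sexp_def 3 ..
qed


lemma tpow_swap: "t ^ k * (W * Y) = W * (t ^ k * Y)"
  by (metis central_pow mult.assoc)

lemma conj_pow:
  fixes X Z W1 W2 :: 'a
  assumes 1: "X * Z - Z * X = W1" and 2: "X * W1 - W1 * X = W2" and 3: "X * W2 = W2 * X"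
  shows "X ^ Suc (Suc m) * Z = Z * X ^ Suc (Suc m) + real (m + 2) *\<^sub>R (W1 * X ^ Suc m)
           + real (Suc (Suc m) choose 2) *\<^sub>R (W2 * X ^ m)"
proof (induct m)
  case 0
  have a: "X * Z = Z * X + W1" using 1 by (simp add: algebra_simps)
  have b: "X * W1 = W1 * X + W2" using 2 by (simp add: algebra_simps)
  have "X ^ 2 * Z = X * (X * Z)" by (simp add: power2_eq_square mult.assoc)
  also have "\<dots> = X * (Z * X) + X * W1" by (simp add: a distrib_left)
  also have "\<dots> = (Z * X + W1) * X + (W1 * X + W2)" by (simp only: mult.assoc[symmetric] a b)
  also have "\<dots> = Z * X ^ 2 + 2 *\<^sub>R (W1 * X) + W2"
    by (simp add: distrib_right mult.assoc power2_eq_square scaleR_2)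
  finally show ?case by (simp add: numeral_2_eq_2)
next
  case (Suc m)
  have a: "X * Z = Z * X + W1" using 1 by (simp add: algebra_simps)
  have b: "X * W1 = W1 * X + W2" using 2 by (simp add: algebra_simps)
  have "X ^ Suc (Suc (Suc m)) * Z = X * (X ^ Suc (Suc m) * Z)" by (simp add: mult.assoc)
  also have "\<dots> = X * (Z * X ^ Suc (Suc m) + real (m + 2) *\<^sub>R (W1 * X ^ Suc m)
           + real (Suc (Suc m) choose 2) *\<^sub>R (W2 * X ^ m))"
    by (simp only: Suc)
  also have "\<dots> = X * Z * X ^ Suc (Suc m) + real (m + 2) *\<^sub>R (X * W1 * X ^ Suc m)
           + real (Suc (Suc m) choose 2) *\<^sub>R (X * W2 * X ^ m)"
    by (simp only: distrib_left mult.assoc mult_scaleR_right)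
  also have "\<dots> = Z * X ^ Suc (Suc (Suc m)) + W1 * X ^ Suc (Suc m)
      + real (m + 2) *\<^sub>R (W1 * X ^ Suc (Suc m)) + real (m + 2) *\<^sub>R (W2 * X ^ Suc m)
      + real (Suc (Suc m) choose 2) *\<^sub>R (W2 * X ^ Suc m)"
    by (simp add: a b 3 distrib_right scaleR_right_distrib mult.assoc)
  also have "\<dots> = Z * X ^ Suc (Suc (Suc m)) + real (Suc m + 2) *\<^sub>R (W1 * X ^ Suc (Suc m))
           + real (Suc (Suc (Suc m)) choose 2) *\<^sub>R (W2 * X ^ Suc m)"
  proof -
    have "real (Suc (Suc (Suc m)) choose 2) = real (m + 2) + real (Suc (Suc m) choose 2)"
      by (simp add: numeral_2_eq_2)
    moreover have "real (Suc m + 2) = 1 + real (m + 2)" by simp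
    ultimately show ?thesis by (simp only: scaleR_left_distrib scaleR_one add.assoc add.left_commute)
  qed
  finally show ?case .
qed


lemma choose2_real: "real (Suc (Suc m) choose 2) = real (m + 2) * real (m + 1) / 2"
proof (induct m)
  case 0 then show ?case by (simp add: numeral_2_eq_2)
next
  case (Suc m)
  have "Suc (Suc (Suc m)) choose 2 = Suc (Suc m) + (Suc (Suc m) choose 2)"
    by (simp add: numeral_2_eq_2)
  then show ?case using Suc by (simp add: field_simps)
qed

lemma conj_texp:
  fixes X Z W1 W2 :: 'a
  assumes 1: "X * Z - Z * X = W1" and 2: "X * W1 - W1 * X = W2" and 3: "X * W2 = W2 * X"
  shows "texp t b X * Z = (Z + b *\<^sub>R (t * W1) + (b * b / 2) *\<^sub>R (t * (t * W2))) * texp t b X"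
proof -
  define g where "g n = (b ^ n / fact n) *\<^sub>R (t ^ n * X ^ n)" for n
  define S where "S = psum g"
  have a: "X * Z = Z * X + W1" using 1 by (simp add: algebra_simps)
  have tm: "g (m + 2) * Z = Z * g (m + 2) + b *\<^sub>R (t * (W1 * g (m + 1))) + (b * b / 2) *\<^sub>R (t * (t * (W2 * g m)))" for m
  proof -
    define c where "c = b ^ (m + 2) / fact (m + 2)"
    have "g (m + 2) * Z = c *\<^sub>R (t ^ (m + 2) * (X ^ Suc (Suc m) * Z))"
      by (simp add: g_def c_def mult.assoc)
    also have "\<dots> = c *\<^sub>R (t ^ (m + 2) * (Z * X ^ Suc (Suc m))) + (c * real (m + 2)) *\<^sub>R (t ^ (m + 2) * (W1 * X ^ Suc m))
       + (c * real (Suc (Suc m) choose 2)) *\<^sub>R (t ^ (m + 2) * (W2 * X ^ m))"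
      by (simp only: conj_pow[OF 1 2 3] distrib_left scaleR_right_distrib mult_scaleR_right scaleR_scaleR)
    also have "c *\<^sub>R (t ^ (m + 2) * (Z * X ^ Suc (Suc m))) = Z * g (m + 2)"
    proof -
      have "t ^ (m + 2) * (Z * X ^ Suc (Suc m)) = Z * (t ^ (m + 2) * X ^ (m + 2))"
        by (simp only: tpow_swap) simp
      then show ?thesis by (simp only: g_def c_def mult_scaleR_right)
    qed
    also have "(c * real (m + 2)) *\<^sub>R (t ^ (m + 2) * (W1 * X ^ Suc m)) = b *\<^sub>R (t * (W1 * g (m + 1)))"
    proof -
      have "c * real (m + 2) = b * (b ^ (m + 1) / fact (m + 1))"
      proof -
        have f: "(fact (m + 2) :: real) = real (m + 2) * fact (m + 1)"
          by (simp add: numeral_2_eq_2)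
        have "c * real (m + 2) = b ^ (m + 2) / fact (m + 1)"
          unfolding c_def f by (simp del: fact_Suc)
        then show ?thesis by (simp add: numeral_2_eq_2 del: fact_Suc)
      qed
      moreover have "t ^ (m + 2) * (W1 * X ^ Suc m) = t * (W1 * (t ^ (m + 1) * X ^ (m + 1)))"
      proof -
        have "t ^ (m + 2) * (W1 * X ^ Suc m) = t * (t ^ (m + 1) * (W1 * X ^ (m + 1)))"
          by (simp add: numeral_2_eq_2 mult.assoc)
        then show ?thesis by (simp only: tpow_swap)
      qed
      ultimately show ?thesis by (simp add: g_def mult_scaleR_right)
    qed
    also have "(c * real (Suc (Suc m) choose 2)) *\<^sub>R (t ^ (m + 2) * (W2 * X ^ m)) = (b * b / 2) *\<^sub>R (t * (t * (W2 * g m)))"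
    proof -
      have "c * real (Suc (Suc m) choose 2) = (b * b / 2) * (b ^ m / fact m)"
      proof -
        have f: "(fact (m + 2) :: real) = real (m + 2) * (real (m + 1) * fact m)"
          by (simp add: numeral_2_eq_2)
        have "c * real (Suc (Suc m) choose 2) = b ^ (m + 2) / (2 * fact m)"
          unfolding c_def f choose2_real by (simp del: fact_Suc of_nat_Suc)
        then show ?thesis by (simp add: numeral_2_eq_2 del: fact_Suc)
      qed
      moreover have "t ^ (m + 2) * (W2 * X ^ m) = t * (t * (W2 * (t ^ m * X ^ m)))"
      proof -
        have "t ^ (m + 2) * (W2 * X ^ m) = t * (t * (t ^ m * (W2 * X ^ m)))"
          by (simp add: numeral_2_eq_2 mult.assoc)
        then show ?thesis by (simp only: tpow_swap)
      qed
      ultimately show ?thesis by (simp add: g_def mult_scaleR_right)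
    qed
    finally show ?thesis .
  qed
  have ind: "S (N + 2) * Z = Z * S (N + 2) + b *\<^sub>R (t * (W1 * S (N + 1))) + (b * b / 2) *\<^sub>R (t * (t * (W2 * S N)))" for N
  proof (induct N)
    case 0
    have s: "S (0 + 2) = 1 + b *\<^sub>R (t * X)" "S (0 + 1) = 1" "S 0 = 0"
      by (simp_all add: S_def psum_def g_def numeral_2_eq_2)
    have z: "Z * (t * X) = t * (Z * X)" by (metis central mult.assoc)
    show ?case unfolding s using z by (simp add: a algebra_simps mult_scaleR_right)
  next
    case (Suc N)
    have s: "S (Suc N + 2) = S (N + 2) + g (N + 2)" "S (Suc N + 1) = S (N + 1) + g (N + 1)" "S (Suc N) = S N + g N"
      by (simp_all add: S_def psum_def)
    show ?case unfolding s using Suc tm[of N]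
      by (simp add: distrib_left distrib_right scaleR_right_distrib algebra_simps)
  qed
  have cS: "adic_conv t S (texp t b X)" unfolding S_def g_def texp_pser by (rule conv_series[OF pser_div])
  have l: "adic_conv t (\<lambda>N. S (N + 2) * Z) (texp t b X * Z)"
    by (rule conv_mult[OF conv_shift[OF cS] conv_const])
  have r: "adic_conv t (\<lambda>N. Z * S (N + 2) + b *\<^sub>R (t * (W1 * S (N + 1))) + (b * b / 2) *\<^sub>R (t * (t * (W2 * S N))))
      (Z * texp t b X + b *\<^sub>R (t * (W1 * texp t b X)) + (b * b / 2) *\<^sub>R (t * (t * (W2 * texp t b X))))"
    by (intro conv_add conv_mult conv_const conv_scaleR conv_shift cS)
  have "texp t b X * Z = Z * texp t b X + b *\<^sub>R (t * (W1 * texp t b X)) + (b * b / 2) *\<^sub>R (t * (t * (W2 * texp t b X)))"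
    using conv_unique[OF l conv_eq[OF r ind[symmetric]]] .
  then show ?thesis by (simp add: distrib_right mult.assoc mult_scaleR_left)
qed

end



locale copy = adic t for t :: "'a::real_algebra_1" +
  fixes H P K D A B :: 'a
  assumes KH: "K * H - H * K = texp t (-1) H * P"
    and KP: "K * P - P * K = expm1_t t H"
    and HP: "H * P - P * H = 0"
    and DH: "D * H - H * D = onemexp_t t H"
    and DA: "D * A - A * D = - A + t * D\<^sup>2"
    and HA: "H * A - A * H = - 2 * D"
    and DP: "D * P - P * D = P"
    and DB: "D * B - B * D = - B"
    and PB: "P * B - B * P = 2 * D"
    and KA: "K * A - A * K = B"
    and KB: "K * B - B * K = A - t * D\<^sup>2"
    and AB: "A * B - B * A = - t * (D * B + B * D)"
    and HB: "H * B - B * H = texp t (-1) H * K + K * texp t (-1) H"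
    and PA: "P * A - A * P = - 2 * K - t * (D * P + P * D)"
    and KD: "K * D - D * K = 0"
begin

abbreviation "E a \<equiv> texp t a H"
abbreviation "G \<equiv> onemexp_t t H"
abbreviation "X \<equiv> expm1_t t H"

lemma eq_of_diff: "(x::'a) * y - y * x = z \<Longrightarrow> x * y = y * x + z"
  by (simp add: algebra_simps)

lemma w1: "E a * E b = E (a + b)" by (rule texp_mult)
lemma w2: "E 0 = 1" by (rule texp_zero)
lemma w3: "H * E a = E a * H" by (rule texp_commute) simp
lemma w4: "P * E a = E a * P" by (rule texp_commute) (use HP in simp)
lemma GH: "H * G = G * H" unfolding onemexp_sexp by (rule sexp_commute) simp
lemma XH: "H * X = X * H" unfolding expm1_sexp by (rule sexp_commute) simp
lemma GP: "P * G = G * P" unfolding onemexp_sexp by (rule sexp_commute) (use HP in simp)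
lemma XP: "P * X = X * P" unfolding expm1_sexp by (rule sexp_commute) (use HP in simp)
lemma GE: "E a * G = G * E a" unfolding onemexp_sexp by (rule sexp_commute) (use w3 in simp)
lemma XE: "E a * X = X * E a" unfolding expm1_sexp by (rule sexp_commute) (use w3 in simp)
lemma XG: "X * G = G * X" unfolding onemexp_sexp by (rule sexp_commute) (use XH in simp)
lemma tG: "t * G = 1 - E (-1)"
  using sexp_t[of "-1" H] unfolding onemexp_sexp by (simp add: algebra_simps)
lemma tX: "t * X = E 1 - 1"
  using sexp_t[of 1 H] unfolding expm1_sexp by simp

lemma Einv: "E a * E (- a) = 1" "E (- a) * E a = 1" by (simp_all add: w1 w2)

lemma flip: "E (- a) * Z = M * E (- a) \<Longrightarrow> Z * E a = E a * M"
proof -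
  assume h: "E (- a) * Z = M * E (- a)"
  have "Z * E a = E a * (E (- a) * Z) * E a" by (simp add: mult.assoc[symmetric] Einv)
  also have "\<dots> = E a * M" by (simp add: h mult.assoc Einv)
  finally show ?thesis .
qed


lemma num_left: "(W::'a) * (numeral n * Y) = numeral n * (W * Y)"
  by (metis mult.assoc mult_of_nat_commute of_nat_numeral)
lemma t_swap: "(W::'a) * (t * Y) = t * (W * Y)" by (metis central mult.assoc)
lemma t_swap': "(W::'a) * t = t * W" by (metis central)

lemma w5: "K * E a = E a * K + a *\<^sub>R (t * (E (a - 1) * P))"
proof -
  have c: "E (- a) * K = (K + (- a) *\<^sub>R (t * (- (E (-1) * P))) + ((- a) * (- a) / 2) *\<^sub>R (t * (t * 0))) * E (- a)"
  proof (rule conj_texp)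
    show "H * K - K * H = - (E (-1) * P)" using KH by (simp add: algebra_simps)
    have "H * (E (-1) * P) = E (-1) * P * H" by (simp add: mult.assoc[symmetric] w3) (simp add: mult.assoc eq_of_diff[OF HP])
    then show "H * - (E (-1) * P) - - (E (-1) * P) * H = 0" by simp
  qed simp
  have "K * E a = E a * (K + a *\<^sub>R (t * (E (-1) * P)))"
    by (rule flip) (use c in simp)
  also have "\<dots> = E a * K + a *\<^sub>R (t * (E (a - 1) * P))"
  proof -
    have e: "E a * (E (-1) * P) = E (a - 1) * P" by (simp add: mult.assoc[symmetric] w1)
    have "E a * (t * (E (-1) * P)) = t * (E (a - 1) * P)" by (simp only: t_swap e)
    then show ?thesis by (simp add: distrib_left mult_scaleR_right)
  qed
  finally show ?thesis .
qed

lemma w6: "D * E a = E a * D + a *\<^sub>R (E a - E (a - 1))"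
proof -
  have c: "E (- a) * D = (D + (- a) *\<^sub>R (t * (- G)) + ((- a) * (- a) / 2) *\<^sub>R (t * (t * 0))) * E (- a)"
  proof (rule conj_texp)
    show "H * D - D * H = - G" using DH by (simp add: algebra_simps)
    show "H * - G - - G * H = 0" using GH by simp
  qed simp
  have "D * E a = E a * (D + a *\<^sub>R (t * G))"
    by (rule flip) (use c in simp)
  also have "\<dots> = E a * D + a *\<^sub>R (E a - E (a - 1))"
    by (simp add: tG distrib_left mult_scaleR_right right_diff_distrib w1)
  finally show ?thesis .
qed

lemma w7: "A * E a = E a * A + (2 * a) *\<^sub>R (t * (E a * D)) + (a * a) *\<^sub>R (t * (E a - E (a - 1)))"
proof -
  have c: "E (- a) * A = (A + (- a) *\<^sub>R (t * (- 2 * D)) + ((- a) * (- a) / 2) *\<^sub>R (t * (t * (2 * G)))) * E (- a)"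
  proof (rule conj_texp)
    show "H * A - A * H = - 2 * D" by (rule HA)
    have "H * (- 2 * D) - (- 2 * D) * H = 2 * (D * H - H * D)"
      by (simp add: num_left algebra_simps)
    then show "H * (- 2 * D) - (- 2 * D) * H = 2 * G" by (simp add: DH)
    show "H * (2 * G) = 2 * G * H" using GH
      by (metis mult.assoc mult_of_nat_commute of_nat_numeral)
  qed
  have "A * E a = E a * (A + (2 * a) *\<^sub>R (t * D) + (a * a) *\<^sub>R (t * (t * G)))"
  proof (rule flip)
    have "(- a) *\<^sub>R (t * (- 2 * D)) = (2 * a) *\<^sub>R (t * D)"
      by (simp add: scaleR_conv_of_real algebra_simps num_left)
    moreover have "((- a) * (- a) / 2) *\<^sub>R (t * (t * (2 * G))) = (a * a) *\<^sub>R (t * (t * G))"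
    proof -
      have "t * (t * (2 * G)) = (2::real) *\<^sub>R (t * (t * G))" by (simp add: num_left scaleR_2 mult_2 distrib_left)
      then show ?thesis by simp
    qed
    ultimately show "E (- a) * A = (A + (2 * a) *\<^sub>R (t * D) + (a * a) *\<^sub>R (t * (t * G))) * E (- a)"
      using c by simp
  qed
  also have "\<dots> = E a * A + (2 * a) *\<^sub>R (t * (E a * D)) + (a * a) *\<^sub>R (t * (E a - E (a - 1)))"
  proof -
    have "E a * (t * (t * G)) = t * (E a - E (a - 1))"
      by (simp add: tG right_diff_distrib t_swap t_swap' w1)
    moreover have "E a * (t * D) = t * (E a * D)" by (rule t_swap)
    ultimately show ?thesis by (simp add: distrib_left mult_scaleR_right)
  qed
  finally show ?thesis .
qed


lemma w1': "E a * (E b * Y) = E (a + b) * Y" by (simp add: mult.assoc[symmetric] w1)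
lemma wt: "E a * (t * (E b * Y)) = t * (E (a + b) * Y)" by (simp only: t_swap[of "E a"] w1')

lemma HK: "H * K = K * H - E (-1) * P" using KH by (simp add: algebra_simps)
lemma EP: "E a * P = P * E a" using w4 by simp

lemma w8: "B * E a = E a * B - (2 * a) *\<^sub>R (t * (E (a - 1) * K)) + (a - a * a) *\<^sub>R (t * (t * (E (a - 2) * P)))"
proof -
  let ?W1 = "E (-1) * K + K * E (-1)"
  let ?W2 = "- 2 * (E (-2) * P)"
  have h1: "H * (E (-1) * K) = E (-1) * K * H - E (-2) * P"
  proof -
    have "H * (E (-1) * K) = E (-1) * (H * K)" by (simp add: mult.assoc[symmetric] w3)
    also have "\<dots> = E (-1) * K * H - E (-2) * P"
      by (simp add: HK right_diff_distrib mult.assoc[symmetric] w1)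
    finally show ?thesis .
  qed
  have h2: "H * (K * E (-1)) = K * E (-1) * H - E (-2) * P"
  proof -
    have "H * (K * E (-1)) = (H * K) * E (-1)" by (simp add: mult.assoc)
    also have "\<dots> = K * (H * E (-1)) - E (-1) * (P * E (-1))"
      by (simp add: HK left_diff_distrib mult.assoc)
    also have "\<dots> = K * E (-1) * H - E (-2) * P"
      by (simp add: w3 w4 mult.assoc[symmetric] w1)
    finally show ?thesis .
  qed
  have c: "E (- a) * B = (B + (- a) *\<^sub>R (t * ?W1) + ((- a) * (- a) / 2) *\<^sub>R (t * (t * ?W2))) * E (- a)"
  proof (rule conj_texp)
    show "H * B - B * H = ?W1" by (rule HB)
    show "H * ?W1 - ?W1 * H = ?W2"
      using h1 h2 by (simp add: distrib_left distrib_right algebra_simps mult_2)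
    have "H * (E (-2) * P) = E (-2) * (P * H)"
    proof -
      have "H * (E (-2) * P) = E (-2) * (H * P)" by (simp add: mult.assoc[symmetric] w3)
      then show ?thesis using eq_of_diff[OF HP] by simp
    qed
    then show "H * ?W2 = ?W2 * H" by (simp add: num_left mult.assoc)
  qed
  have "B * E a = E a * (B - a *\<^sub>R (t * ?W1) - (a * a) *\<^sub>R (t * (t * (E (-2) * P))))"
  proof (rule flip)
    have "((- a) * (- a) / 2) *\<^sub>R (t * (t * ?W2)) = - ((a * a) *\<^sub>R (t * (t * (E (-2) * P))))"
    proof -
      have "t * (t * ?W2) = (- 2::real) *\<^sub>R (t * (t * (E (-2) * P)))" by (simp add: num_left scaleR_2 mult_2 distrib_left right_diff_distrib)
      then show ?thesis by simp
    qed
    then show "E (- a) * B = (B - a *\<^sub>R (t * ?W1) - (a * a) *\<^sub>R (t * (t * (E (-2) * P)))) * E (- a)"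
      using c by simp
  qed
  also have "\<dots> = E a * B - (2 * a) *\<^sub>R (t * (E (a - 1) * K)) + (a - a * a) *\<^sub>R (t * (t * (E (a - 2) * P)))"
  proof -
    have k: "K * E (-1) = E (-1) * K - t * (E (-2) * P)" using w5[of "-1"] by simp
    have e1: "E a * ?W1 = 2 *\<^sub>R (E (a - 1) * K) - t * (E (a - 2) * P)"
    proof -
      have "E a * ?W1 = E a * (E (-1) * K) + (E a * (E (-1) * K) - E a * (t * (E (-2) * P)))"
        by (simp only: k distrib_left right_diff_distrib)
      also have "\<dots> = E (a + -1) * K + (E (a + -1) * K - t * (E (a + -2) * P))"
        by (simp only: w1' wt)
      also have "\<dots> = 2 *\<^sub>R (E (a - 1) * K) - t * (E (a - 2) * P)"
        by (simp add: scaleR_2)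
      finally show ?thesis .
    qed
    have e2: "E a * (t * (t * (E (-2) * P))) = t * (t * (E (a - 2) * P))"
      by (simp only: t_swap[of "E a"] w1') simp
    have "E a * (B - a *\<^sub>R (t * ?W1) - (a * a) *\<^sub>R (t * (t * (E (-2) * P))))
        = E a * B - a *\<^sub>R (t * (E a * ?W1)) - (a * a) *\<^sub>R (E a * (t * (t * (E (-2) * P))))"
      by (simp add: right_diff_distrib mult_scaleR_right t_swap[of "E a"])
    also have "\<dots> = E a * B - a *\<^sub>R (t * (2 *\<^sub>R (E (a - 1) * K) - t * (E (a - 2) * P))) - (a * a) *\<^sub>R (t * (t * (E (a - 2) * P)))"
      by (simp only: e1 e2)
    also have "\<dots> = E a * B - (2 * a) *\<^sub>R (t * (E (a - 1) * K)) + (a - a * a) *\<^sub>R (t * (t * (E (a - 2) * P)))"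
      by (simp add: right_diff_distrib mult_scaleR_right scaleR_left_diff_distrib scaleR_right_diff_distrib)
    finally show ?thesis .
  qed
  finally show ?thesis .
qed


lemma w9: "P * H = H * P" using HP by (simp add: algebra_simps)
lemma w10: "K * H = H * K + E (-1) * P" using KH by (simp add: algebra_simps)
lemma w11: "D * H = H * D + G" using DH by (simp add: algebra_simps)
lemma w12: "A * H = H * A + 2 * D" using HA by (simp add: algebra_simps)
lemma w13: "B * H = H * B - 2 * (E (-1) * K) + t * (E (-2) * P)"
proof -
  have k: "K * E (-1) = E (-1) * K - t * (E (-2) * P)" using w5[of "-1"] by simp
  show ?thesis using HB unfolding k by (simp add: algebra_simps mult_2)
qed
lemma w14: "K * P = P * K + X" using KP by (simp add: algebra_simps)
lemma w15: "D * P = P * D + P" using DP by (simp add: algebra_simps)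
lemma w16: "A * P = P * A + 2 * K + 2 * (t * (P * D)) + t * P"
proof -
  have "D * P = P * D + P" by (rule w15)
  then show ?thesis using PA by (simp add: algebra_simps mult_2)
qed
lemma w17: "B * P = P * B - 2 * D" using PB by (simp add: algebra_simps)
lemma w18: "D * K = K * D" using KD by (simp add: algebra_simps)
lemma w19: "A * K = K * A - B" using KA by (simp add: algebra_simps)
lemma w20: "B * K = K * B - A + t * (D * D)" using KB by (simp add: algebra_simps power2_eq_square)
lemma w21: "A * D = D * A + A - t * (D * D)" using DA by (simp add: algebra_simps power2_eq_square)
lemma w22: "B * D = D * B + B" using DB by (simp add: algebra_simps)
lemma w23: "B * A = A * B + 2 * (t * (D * B)) + t * B"
proof -
  have "B * D = D * B + B" by (rule w22)
  then show ?thesis using AB by (simp add: algebra_simps mult_2)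
qed
lemma tGx: "t * (Y * G) = Y - Y * E (-1)"
  by (simp add: t_swap[symmetric] tG right_diff_distrib)
lemma tGx': "t * (Y * (G * Z)) = (Y - Y * E (-1)) * Z"
proof -
  have "t * (Y * (G * Z)) = (t * (Y * G)) * Z" by (simp only: mult.assoc)
  then show ?thesis by (simp only: tGx)
qed

end



lemma num_comm: "(x::'a::ring_1) * numeral n = numeral n * x"
  by (metis mult_of_nat_commute of_nat_numeral)

lemma nb0: "numeral (Num.Bit0 n) * (x::'a::ring_1) = numeral n * x + numeral n * x"
  by (metis numeral_Bit0 distrib_right)
lemma nb1: "numeral (Num.Bit1 n) * (x::'a::ring_1) = numeral n * x + numeral n * x + x"
  by (metis numeral_Bit1 distrib_right mult_1)

locale two = c1: copy t H1 P1 K1 D1 A1 B1 + c2: copy t H2 P2 K2 D2 A2 B2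
  for t :: "'a::real_algebra_1" and H1 P1 K1 D1 A1 B1 H2 P2 K2 D2 A2 B2 +
  assumes cross: "\<forall>x\<in>{H1, P1, K1, D1, A1, B1}. \<forall>y\<in>{H2, P2, K2, D2, A2, B2}. x * y = y * x"
begin

abbreviation "E1 a \<equiv> texp t a H1"
abbreviation "G1 \<equiv> onemexp_t t H1"
abbreviation "X1 \<equiv> expm1_t t H1"
abbreviation "E2 a \<equiv> texp t a H2"
abbreviation "G2 \<equiv> onemexp_t t H2"
abbreviation "X2 \<equiv> expm1_t t H2"

definition "S1 = {H1, P1, K1, D1, A1, B1, G1, X1} \<union> range E1"
definition "S2 = {H2, P2, K2, D2, A2, B2, G2, X2} \<union> range E2"

lemma g2_S1: "y \<in> {H2, P2, K2, D2, A2, B2} \<Longrightarrow> x \<in> S1 \<Longrightarrow> x * y = y * x"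
proof -
  assume y: "y \<in> {H2, P2, K2, D2, A2, B2}" and x: "x \<in> S1"
  have yH: "y * H1 = H1 * y" using cross y by auto
  have e: "y * E1 a = E1 a * y" for a by (rule c1.texp_commute[OF yH])
  have g: "y * G1 = G1 * y" unfolding c1.onemexp_sexp by (rule c1.sexp_commute[OF yH])
  have xx: "y * X1 = X1 * y" unfolding c1.expm1_sexp by (rule c1.sexp_commute[OF yH])
  show ?thesis using x cross y e g xx unfolding S1_def by auto
qed

lemma S1_H2: "x \<in> S1 \<Longrightarrow> x * H2 = H2 * x" by (rule g2_S1) auto

lemma cross_all: "x \<in> S1 \<Longrightarrow> y \<in> S2 \<Longrightarrow> x * y = y * x"
proof -
  assume x: "x \<in> S1" and y: "y \<in> S2"
  have xH: "x * H2 = H2 * x" by (rule S1_H2[OF x])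
  have e: "x * E2 a = E2 a * x" for a by (rule c1.texp_commute[OF xH])
  have g: "x * G2 = G2 * x" unfolding c1.onemexp_sexp by (rule c1.sexp_commute[OF xH])
  have xx: "x * X2 = X2 * x" unfolding c1.expm1_sexp by (rule c1.sexp_commute[OF xH])
  show ?thesis using y g2_S1[OF _ x] e g xx unfolding S2_def by auto
qed

lemma t_swap': "(W::'a) * t = t * W" by (rule c1.t_swap')

lemma r0: "E1 a * E1 b = E1 (a + b)" by (rule c1.w1)
lemma s0: "E1 a * (E1 b * z) = (E1 (a + b)) * z" by (simp only: mult.assoc[symmetric] r0)
lemma r1: "H1 * E1 a = E1 a * H1" by (rule c1.w3)
lemma s1: "H1 * (E1 a * z) = (E1 a * H1) * z" by (simp only: mult.assoc[symmetric] r1)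
lemma r2: "P1 * E1 a = E1 a * P1" by (rule c1.w4)
lemma s2: "P1 * (E1 a * z) = (E1 a * P1) * z" by (simp only: mult.assoc[symmetric] r2)
lemma r3: "K1 * E1 a = E1 a * K1 + a *\<^sub>R (t * (E1 (a - 1) * P1))" by (rule c1.w5)
lemma s3: "K1 * (E1 a * z) = (E1 a * K1 + a *\<^sub>R (t * (E1 (a - 1) * P1))) * z" by (simp only: mult.assoc[symmetric] r3)
lemma r4: "D1 * E1 a = E1 a * D1 + a *\<^sub>R (E1 a - E1 (a - 1))" by (rule c1.w6)
lemma s4: "D1 * (E1 a * z) = (E1 a * D1 + a *\<^sub>R (E1 a - E1 (a - 1))) * z" by (simp only: mult.assoc[symmetric] r4)
lemma r5: "A1 * E1 a = E1 a * A1 + (2 * a) *\<^sub>R (t * (E1 a * D1)) + (a * a) *\<^sub>R (t * (E1 a - E1 (a - 1)))" by (rule c1.w7)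
lemma s5: "A1 * (E1 a * z) = (E1 a * A1 + (2 * a) *\<^sub>R (t * (E1 a * D1)) + (a * a) *\<^sub>R (t * (E1 a - E1 (a - 1)))) * z" by (simp only: mult.assoc[symmetric] r5)
lemma r6: "B1 * E1 a = E1 a * B1 - (2 * a) *\<^sub>R (t * (E1 (a - 1) * K1)) + (a - a * a) *\<^sub>R (t * (t * (E1 (a - 2) * P1)))" by (rule c1.w8)
lemma s6: "B1 * (E1 a * z) = (E1 a * B1 - (2 * a) *\<^sub>R (t * (E1 (a - 1) * K1)) + (a - a * a) *\<^sub>R (t * (t * (E1 (a - 2) * P1)))) * z" by (simp only: mult.assoc[symmetric] r6)
lemma r7: "P1 * H1 = H1 * P1" by (rule c1.w9)
lemma s7: "P1 * (H1 * z) = (H1 * P1) * z" by (simp only: mult.assoc[symmetric] r7)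
lemma r8: "K1 * H1 = H1 * K1 + E1 (-1) * P1" by (rule c1.w10)
lemma s8: "K1 * (H1 * z) = (H1 * K1 + E1 (-1) * P1) * z" by (simp only: mult.assoc[symmetric] r8)
lemma r9: "D1 * H1 = H1 * D1 + G1" by (rule c1.w11)
lemma s9: "D1 * (H1 * z) = (H1 * D1 + G1) * z" by (simp only: mult.assoc[symmetric] r9)
lemma r10: "A1 * H1 = H1 * A1 + 2 * D1" by (rule c1.w12)
lemma s10: "A1 * (H1 * z) = (H1 * A1 + 2 * D1) * z" by (simp only: mult.assoc[symmetric] r10)
lemma r11: "B1 * H1 = H1 * B1 - 2 * (E1 (-1) * K1) + t * (E1 (-2) * P1)" by (rule c1.w13)
lemma s11: "B1 * (H1 * z) = (H1 * B1 - 2 * (E1 (-1) * K1) + t * (E1 (-2) * P1)) * z" by (simp only: mult.assoc[symmetric] r11)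
lemma r12: "K1 * P1 = P1 * K1 + X1" by (rule c1.w14)
lemma s12: "K1 * (P1 * z) = (P1 * K1 + X1) * z" by (simp only: mult.assoc[symmetric] r12)
lemma r13: "D1 * P1 = P1 * D1 + P1" by (rule c1.w15)
lemma s13: "D1 * (P1 * z) = (P1 * D1 + P1) * z" by (simp only: mult.assoc[symmetric] r13)
lemma r14: "A1 * P1 = P1 * A1 + 2 * K1 + 2 * (t * (P1 * D1)) + t * P1" by (rule c1.w16)
lemma s14: "A1 * (P1 * z) = (P1 * A1 + 2 * K1 + 2 * (t * (P1 * D1)) + t * P1) * z" by (simp only: mult.assoc[symmetric] r14)
lemma r15: "B1 * P1 = P1 * B1 - 2 * D1" by (rule c1.w17)
lemma s15: "B1 * (P1 * z) = (P1 * B1 - 2 * D1) * z" by (simp only: mult.assoc[symmetric] r15)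
lemma r16: "D1 * K1 = K1 * D1" by (rule c1.w18)
lemma s16: "D1 * (K1 * z) = (K1 * D1) * z" by (simp only: mult.assoc[symmetric] r16)
lemma r17: "A1 * K1 = K1 * A1 - B1" by (rule c1.w19)
lemma s17: "A1 * (K1 * z) = (K1 * A1 - B1) * z" by (simp only: mult.assoc[symmetric] r17)
lemma r18: "B1 * K1 = K1 * B1 - A1 + t * (D1 * D1)" by (rule c1.w20)
lemma s18: "B1 * (K1 * z) = (K1 * B1 - A1 + t * (D1 * D1)) * z" by (simp only: mult.assoc[symmetric] r18)
lemma r19: "A1 * D1 = D1 * A1 + A1 - t * (D1 * D1)" by (rule c1.w21)
lemma s19: "A1 * (D1 * z) = (D1 * A1 + A1 - t * (D1 * D1)) * z" by (simp only: mult.assoc[symmetric] r19)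
lemma r20: "B1 * D1 = D1 * B1 + B1" by (rule c1.w22)
lemma s20: "B1 * (D1 * z) = (D1 * B1 + B1) * z" by (simp only: mult.assoc[symmetric] r20)
lemma r21: "B1 * A1 = A1 * B1 + 2 * (t * (D1 * B1)) + t * B1" by (rule c1.w23)
lemma s21: "B1 * (A1 * z) = (A1 * B1 + 2 * (t * (D1 * B1)) + t * B1) * z" by (simp only: mult.assoc[symmetric] r21)
lemma r22: "E1 a * G1 = G1 * E1 a" by (rule c1.GE)
lemma s22: "E1 a * (G1 * z) = (G1 * E1 a) * z" by (simp only: mult.assoc[symmetric] r22)
lemma r23: "H1 * G1 = G1 * H1" by (rule c1.GH)
lemma s23: "H1 * (G1 * z) = (G1 * H1) * z" by (simp only: mult.assoc[symmetric] r23)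
lemma r24: "P1 * G1 = G1 * P1" by (rule c1.GP)
lemma s24: "P1 * (G1 * z) = (G1 * P1) * z" by (simp only: mult.assoc[symmetric] r24)
lemma r25: "E1 a * X1 = X1 * E1 a" by (rule c1.XE)
lemma s25: "E1 a * (X1 * z) = (X1 * E1 a) * z" by (simp only: mult.assoc[symmetric] r25)
lemma r26: "H1 * X1 = X1 * H1" by (rule c1.XH)
lemma s26: "H1 * (X1 * z) = (X1 * H1) * z" by (simp only: mult.assoc[symmetric] r26)
lemma r27: "P1 * X1 = X1 * P1" by (rule c1.XP)
lemma s27: "P1 * (X1 * z) = (X1 * P1) * z" by (simp only: mult.assoc[symmetric] r27)
lemma r28: "X1 * G1 = G1 * X1" by (rule c1.XG)
lemma s28: "X1 * (G1 * z) = (G1 * X1) * z" by (simp only: mult.assoc[symmetric] r28)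
lemma r29: "t * G1 = 1 - E1 (-1)" by (rule c1.tG)
lemma s29: "t * (G1 * z) = (1 - E1 (-1)) * z" by (simp only: mult.assoc[symmetric] r29)
lemma r30: "t * X1 = E1 1 - 1" by (rule c1.tX)
lemma s30: "t * (X1 * z) = (E1 1 - 1) * z" by (simp only: mult.assoc[symmetric] r30)
lemma r31: "E2 a * E2 b = E2 (a + b)" by (rule c2.w1)
lemma s31: "E2 a * (E2 b * z) = (E2 (a + b)) * z" by (simp only: mult.assoc[symmetric] r31)
lemma r32: "H2 * E2 a = E2 a * H2" by (rule c2.w3)
lemma s32: "H2 * (E2 a * z) = (E2 a * H2) * z" by (simp only: mult.assoc[symmetric] r32)
lemma r33: "P2 * E2 a = E2 a * P2" by (rule c2.w4)
lemma s33: "P2 * (E2 a * z) = (E2 a * P2) * z" by (simp only: mult.assoc[symmetric] r33)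
lemma r34: "K2 * E2 a = E2 a * K2 + a *\<^sub>R (t * (E2 (a - 1) * P2))" by (rule c2.w5)
lemma s34: "K2 * (E2 a * z) = (E2 a * K2 + a *\<^sub>R (t * (E2 (a - 1) * P2))) * z" by (simp only: mult.assoc[symmetric] r34)
lemma r35: "D2 * E2 a = E2 a * D2 + a *\<^sub>R (E2 a - E2 (a - 1))" by (rule c2.w6)
lemma s35: "D2 * (E2 a * z) = (E2 a * D2 + a *\<^sub>R (E2 a - E2 (a - 1))) * z" by (simp only: mult.assoc[symmetric] r35)
lemma r36: "A2 * E2 a = E2 a * A2 + (2 * a) *\<^sub>R (t * (E2 a * D2)) + (a * a) *\<^sub>R (t * (E2 a - E2 (a - 1)))" by (rule c2.w7)
lemma s36: "A2 * (E2 a * z) = (E2 a * A2 + (2 * a) *\<^sub>R (t * (E2 a * D2)) + (a * a) *\<^sub>R (t * (E2 a - E2 (a - 1)))) * z" by (simp only: mult.assoc[symmetric] r36)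
lemma r37: "B2 * E2 a = E2 a * B2 - (2 * a) *\<^sub>R (t * (E2 (a - 1) * K2)) + (a - a * a) *\<^sub>R (t * (t * (E2 (a - 2) * P2)))" by (rule c2.w8)
lemma s37: "B2 * (E2 a * z) = (E2 a * B2 - (2 * a) *\<^sub>R (t * (E2 (a - 1) * K2)) + (a - a * a) *\<^sub>R (t * (t * (E2 (a - 2) * P2)))) * z" by (simp only: mult.assoc[symmetric] r37)
lemma r38: "P2 * H2 = H2 * P2" by (rule c2.w9)
lemma s38: "P2 * (H2 * z) = (H2 * P2) * z" by (simp only: mult.assoc[symmetric] r38)
lemma r39: "K2 * H2 = H2 * K2 + E2 (-1) * P2" by (rule c2.w10)
lemma s39: "K2 * (H2 * z) = (H2 * K2 + E2 (-1) * P2) * z" by (simp only: mult.assoc[symmetric] r39)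
lemma r40: "D2 * H2 = H2 * D2 + G2" by (rule c2.w11)
lemma s40: "D2 * (H2 * z) = (H2 * D2 + G2) * z" by (simp only: mult.assoc[symmetric] r40)
lemma r41: "A2 * H2 = H2 * A2 + 2 * D2" by (rule c2.w12)
lemma s41: "A2 * (H2 * z) = (H2 * A2 + 2 * D2) * z" by (simp only: mult.assoc[symmetric] r41)
lemma r42: "B2 * H2 = H2 * B2 - 2 * (E2 (-1) * K2) + t * (E2 (-2) * P2)" by (rule c2.w13)
lemma s42: "B2 * (H2 * z) = (H2 * B2 - 2 * (E2 (-1) * K2) + t * (E2 (-2) * P2)) * z" by (simp only: mult.assoc[symmetric] r42)
lemma r43: "K2 * P2 = P2 * K2 + X2" by (rule c2.w14)
lemma s43: "K2 * (P2 * z) = (P2 * K2 + X2) * z" by (simp only: mult.assoc[symmetric] r43)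
lemma r44: "D2 * P2 = P2 * D2 + P2" by (rule c2.w15)
lemma s44: "D2 * (P2 * z) = (P2 * D2 + P2) * z" by (simp only: mult.assoc[symmetric] r44)
lemma r45: "A2 * P2 = P2 * A2 + 2 * K2 + 2 * (t * (P2 * D2)) + t * P2" by (rule c2.w16)
lemma s45: "A2 * (P2 * z) = (P2 * A2 + 2 * K2 + 2 * (t * (P2 * D2)) + t * P2) * z" by (simp only: mult.assoc[symmetric] r45)
lemma r46: "B2 * P2 = P2 * B2 - 2 * D2" by (rule c2.w17)
lemma s46: "B2 * (P2 * z) = (P2 * B2 - 2 * D2) * z" by (simp only: mult.assoc[symmetric] r46)
lemma r47: "D2 * K2 = K2 * D2" by (rule c2.w18)
lemma s47: "D2 * (K2 * z) = (K2 * D2) * z" by (simp only: mult.assoc[symmetric] r47)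
lemma r48: "A2 * K2 = K2 * A2 - B2" by (rule c2.w19)
lemma s48: "A2 * (K2 * z) = (K2 * A2 - B2) * z" by (simp only: mult.assoc[symmetric] r48)
lemma r49: "B2 * K2 = K2 * B2 - A2 + t * (D2 * D2)" by (rule c2.w20)
lemma s49: "B2 * (K2 * z) = (K2 * B2 - A2 + t * (D2 * D2)) * z" by (simp only: mult.assoc[symmetric] r49)
lemma r50: "A2 * D2 = D2 * A2 + A2 - t * (D2 * D2)" by (rule c2.w21)
lemma s50: "A2 * (D2 * z) = (D2 * A2 + A2 - t * (D2 * D2)) * z" by (simp only: mult.assoc[symmetric] r50)
lemma r51: "B2 * D2 = D2 * B2 + B2" by (rule c2.w22)
lemma s51: "B2 * (D2 * z) = (D2 * B2 + B2) * z" by (simp only: mult.assoc[symmetric] r51)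
lemma r52: "B2 * A2 = A2 * B2 + 2 * (t * (D2 * B2)) + t * B2" by (rule c2.w23)
lemma s52: "B2 * (A2 * z) = (A2 * B2 + 2 * (t * (D2 * B2)) + t * B2) * z" by (simp only: mult.assoc[symmetric] r52)
lemma r53: "E2 a * G2 = G2 * E2 a" by (rule c2.GE)
lemma s53: "E2 a * (G2 * z) = (G2 * E2 a) * z" by (simp only: mult.assoc[symmetric] r53)
lemma r54: "H2 * G2 = G2 * H2" by (rule c2.GH)
lemma s54: "H2 * (G2 * z) = (G2 * H2) * z" by (simp only: mult.assoc[symmetric] r54)
lemma r55: "P2 * G2 = G2 * P2" by (rule c2.GP)
lemma s55: "P2 * (G2 * z) = (G2 * P2) * z" by (simp only: mult.assoc[symmetric] r55)
lemma r56: "E2 a * X2 = X2 * E2 a" by (rule c2.XE)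
lemma s56: "E2 a * (X2 * z) = (X2 * E2 a) * z" by (simp only: mult.assoc[symmetric] r56)
lemma r57: "H2 * X2 = X2 * H2" by (rule c2.XH)
lemma s57: "H2 * (X2 * z) = (X2 * H2) * z" by (simp only: mult.assoc[symmetric] r57)
lemma r58: "P2 * X2 = X2 * P2" by (rule c2.XP)
lemma s58: "P2 * (X2 * z) = (X2 * P2) * z" by (simp only: mult.assoc[symmetric] r58)
lemma r59: "X2 * G2 = G2 * X2" by (rule c2.XG)
lemma s59: "X2 * (G2 * z) = (G2 * X2) * z" by (simp only: mult.assoc[symmetric] r59)
lemma r60: "t * G2 = 1 - E2 (-1)" by (rule c2.tG)
lemma s60: "t * (G2 * z) = (1 - E2 (-1)) * z" by (simp only: mult.assoc[symmetric] r60)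
lemma r61: "t * X2 = E2 1 - 1" by (rule c2.tX)
lemma s61: "t * (X2 * z) = (E2 1 - 1) * z" by (simp only: mult.assoc[symmetric] r61)
lemma r62: "E2 b * G1 = G1 * E2 b" by (rule cross_all[symmetric]) (auto simp: S1_def S2_def)
lemma s62: "E2 b * (G1 * z) = (G1 * E2 b) * z" by (simp only: mult.assoc[symmetric] r62)
lemma r63: "E2 b * X1 = X1 * E2 b" by (rule cross_all[symmetric]) (auto simp: S1_def S2_def)
lemma s63: "E2 b * (X1 * z) = (X1 * E2 b) * z" by (simp only: mult.assoc[symmetric] r63)
lemma r64: "E2 b * E1 a = E1 a * E2 b" by (rule cross_all[symmetric]) (auto simp: S1_def S2_def)
lemma s64: "E2 b * (E1 a * z) = (E1 a * E2 b) * z" by (simp only: mult.assoc[symmetric] r64)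
lemma r65: "E2 b * H1 = H1 * E2 b" by (rule cross_all[symmetric]) (auto simp: S1_def S2_def)
lemma s65: "E2 b * (H1 * z) = (H1 * E2 b) * z" by (simp only: mult.assoc[symmetric] r65)
lemma r66: "E2 b * P1 = P1 * E2 b" by (rule cross_all[symmetric]) (auto simp: S1_def S2_def)
lemma s66: "E2 b * (P1 * z) = (P1 * E2 b) * z" by (simp only: mult.assoc[symmetric] r66)
lemma r67: "E2 b * K1 = K1 * E2 b" by (rule cross_all[symmetric]) (auto simp: S1_def S2_def)
lemma s67: "E2 b * (K1 * z) = (K1 * E2 b) * z" by (simp only: mult.assoc[symmetric] r67)
lemma r68: "E2 b * D1 = D1 * E2 b" by (rule cross_all[symmetric]) (auto simp: S1_def S2_def)
lemma s68: "E2 b * (D1 * z) = (D1 * E2 b) * z" by (simp only: mult.assoc[symmetric] r68)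
lemma r69: "E2 b * A1 = A1 * E2 b" by (rule cross_all[symmetric]) (auto simp: S1_def S2_def)
lemma s69: "E2 b * (A1 * z) = (A1 * E2 b) * z" by (simp only: mult.assoc[symmetric] r69)
lemma r70: "E2 b * B1 = B1 * E2 b" by (rule cross_all[symmetric]) (auto simp: S1_def S2_def)
lemma s70: "E2 b * (B1 * z) = (B1 * E2 b) * z" by (simp only: mult.assoc[symmetric] r70)
lemma r71: "H2 * G1 = G1 * H2" by (rule cross_all[symmetric]) (auto simp: S1_def S2_def)
lemma s71: "H2 * (G1 * z) = (G1 * H2) * z" by (simp only: mult.assoc[symmetric] r71)
lemma r72: "H2 * X1 = X1 * H2" by (rule cross_all[symmetric]) (auto simp: S1_def S2_def)
lemma s72: "H2 * (X1 * z) = (X1 * H2) * z" by (simp only: mult.assoc[symmetric] r72)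
lemma r73: "H2 * E1 a = E1 a * H2" by (rule cross_all[symmetric]) (auto simp: S1_def S2_def)
lemma s73: "H2 * (E1 a * z) = (E1 a * H2) * z" by (simp only: mult.assoc[symmetric] r73)
lemma r74: "H2 * H1 = H1 * H2" by (rule cross_all[symmetric]) (auto simp: S1_def S2_def)
lemma s74: "H2 * (H1 * z) = (H1 * H2) * z" by (simp only: mult.assoc[symmetric] r74)
lemma r75: "H2 * P1 = P1 * H2" by (rule cross_all[symmetric]) (auto simp: S1_def S2_def)
lemma s75: "H2 * (P1 * z) = (P1 * H2) * z" by (simp only: mult.assoc[symmetric] r75)
lemma r76: "H2 * K1 = K1 * H2" by (rule cross_all[symmetric]) (auto simp: S1_def S2_def)
lemma s76: "H2 * (K1 * z) = (K1 * H2) * z" by (simp only: mult.assoc[symmetric] r76)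
lemma r77: "H2 * D1 = D1 * H2" by (rule cross_all[symmetric]) (auto simp: S1_def S2_def)
lemma s77: "H2 * (D1 * z) = (D1 * H2) * z" by (simp only: mult.assoc[symmetric] r77)
lemma r78: "H2 * A1 = A1 * H2" by (rule cross_all[symmetric]) (auto simp: S1_def S2_def)
lemma s78: "H2 * (A1 * z) = (A1 * H2) * z" by (simp only: mult.assoc[symmetric] r78)
lemma r79: "H2 * B1 = B1 * H2" by (rule cross_all[symmetric]) (auto simp: S1_def S2_def)
lemma s79: "H2 * (B1 * z) = (B1 * H2) * z" by (simp only: mult.assoc[symmetric] r79)
lemma r80: "P2 * G1 = G1 * P2" by (rule cross_all[symmetric]) (auto simp: S1_def S2_def)
lemma s80: "P2 * (G1 * z) = (G1 * P2) * z" by (simp only: mult.assoc[symmetric] r80)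
lemma r81: "P2 * X1 = X1 * P2" by (rule cross_all[symmetric]) (auto simp: S1_def S2_def)
lemma s81: "P2 * (X1 * z) = (X1 * P2) * z" by (simp only: mult.assoc[symmetric] r81)
lemma r82: "P2 * E1 a = E1 a * P2" by (rule cross_all[symmetric]) (auto simp: S1_def S2_def)
lemma s82: "P2 * (E1 a * z) = (E1 a * P2) * z" by (simp only: mult.assoc[symmetric] r82)
lemma r83: "P2 * H1 = H1 * P2" by (rule cross_all[symmetric]) (auto simp: S1_def S2_def)
lemma s83: "P2 * (H1 * z) = (H1 * P2) * z" by (simp only: mult.assoc[symmetric] r83)
lemma r84: "P2 * P1 = P1 * P2" by (rule cross_all[symmetric]) (auto simp: S1_def S2_def)
lemma s84: "P2 * (P1 * z) = (P1 * P2) * z" by (simp only: mult.assoc[symmetric] r84)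
lemma r85: "P2 * K1 = K1 * P2" by (rule cross_all[symmetric]) (auto simp: S1_def S2_def)
lemma s85: "P2 * (K1 * z) = (K1 * P2) * z" by (simp only: mult.assoc[symmetric] r85)
lemma r86: "P2 * D1 = D1 * P2" by (rule cross_all[symmetric]) (auto simp: S1_def S2_def)
lemma s86: "P2 * (D1 * z) = (D1 * P2) * z" by (simp only: mult.assoc[symmetric] r86)
lemma r87: "P2 * A1 = A1 * P2" by (rule cross_all[symmetric]) (auto simp: S1_def S2_def)
lemma s87: "P2 * (A1 * z) = (A1 * P2) * z" by (simp only: mult.assoc[symmetric] r87)
lemma r88: "P2 * B1 = B1 * P2" by (rule cross_all[symmetric]) (auto simp: S1_def S2_def)
lemma s88: "P2 * (B1 * z) = (B1 * P2) * z" by (simp only: mult.assoc[symmetric] r88)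
lemma r89: "K2 * G1 = G1 * K2" by (rule cross_all[symmetric]) (auto simp: S1_def S2_def)
lemma s89: "K2 * (G1 * z) = (G1 * K2) * z" by (simp only: mult.assoc[symmetric] r89)
lemma r90: "K2 * X1 = X1 * K2" by (rule cross_all[symmetric]) (auto simp: S1_def S2_def)
lemma s90: "K2 * (X1 * z) = (X1 * K2) * z" by (simp only: mult.assoc[symmetric] r90)
lemma r91: "K2 * E1 a = E1 a * K2" by (rule cross_all[symmetric]) (auto simp: S1_def S2_def)
lemma s91: "K2 * (E1 a * z) = (E1 a * K2) * z" by (simp only: mult.assoc[symmetric] r91)
lemma r92: "K2 * H1 = H1 * K2" by (rule cross_all[symmetric]) (auto simp: S1_def S2_def)
lemma s92: "K2 * (H1 * z) = (H1 * K2) * z" by (simp only: mult.assoc[symmetric] r92)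
lemma r93: "K2 * P1 = P1 * K2" by (rule cross_all[symmetric]) (auto simp: S1_def S2_def)
lemma s93: "K2 * (P1 * z) = (P1 * K2) * z" by (simp only: mult.assoc[symmetric] r93)
lemma r94: "K2 * K1 = K1 * K2" by (rule cross_all[symmetric]) (auto simp: S1_def S2_def)
lemma s94: "K2 * (K1 * z) = (K1 * K2) * z" by (simp only: mult.assoc[symmetric] r94)
lemma r95: "K2 * D1 = D1 * K2" by (rule cross_all[symmetric]) (auto simp: S1_def S2_def)
lemma s95: "K2 * (D1 * z) = (D1 * K2) * z" by (simp only: mult.assoc[symmetric] r95)
lemma r96: "K2 * A1 = A1 * K2" by (rule cross_all[symmetric]) (auto simp: S1_def S2_def)
lemma s96: "K2 * (A1 * z) = (A1 * K2) * z" by (simp only: mult.assoc[symmetric] r96)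
lemma r97: "K2 * B1 = B1 * K2" by (rule cross_all[symmetric]) (auto simp: S1_def S2_def)
lemma s97: "K2 * (B1 * z) = (B1 * K2) * z" by (simp only: mult.assoc[symmetric] r97)
lemma r98: "D2 * G1 = G1 * D2" by (rule cross_all[symmetric]) (auto simp: S1_def S2_def)
lemma s98: "D2 * (G1 * z) = (G1 * D2) * z" by (simp only: mult.assoc[symmetric] r98)
lemma r99: "D2 * X1 = X1 * D2" by (rule cross_all[symmetric]) (auto simp: S1_def S2_def)
lemma s99: "D2 * (X1 * z) = (X1 * D2) * z" by (simp only: mult.assoc[symmetric] r99)
lemma r100: "D2 * E1 a = E1 a * D2" by (rule cross_all[symmetric]) (auto simp: S1_def S2_def)
lemma s100: "D2 * (E1 a * z) = (E1 a * D2) * z" by (simp only: mult.assoc[symmetric] r100)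
lemma r101: "D2 * H1 = H1 * D2" by (rule cross_all[symmetric]) (auto simp: S1_def S2_def)
lemma s101: "D2 * (H1 * z) = (H1 * D2) * z" by (simp only: mult.assoc[symmetric] r101)
lemma r102: "D2 * P1 = P1 * D2" by (rule cross_all[symmetric]) (auto simp: S1_def S2_def)
lemma s102: "D2 * (P1 * z) = (P1 * D2) * z" by (simp only: mult.assoc[symmetric] r102)
lemma r103: "D2 * K1 = K1 * D2" by (rule cross_all[symmetric]) (auto simp: S1_def S2_def)
lemma s103: "D2 * (K1 * z) = (K1 * D2) * z" by (simp only: mult.assoc[symmetric] r103)
lemma r104: "D2 * D1 = D1 * D2" by (rule cross_all[symmetric]) (auto simp: S1_def S2_def)
lemma s104: "D2 * (D1 * z) = (D1 * D2) * z" by (simp only: mult.assoc[symmetric] r104)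
lemma r105: "D2 * A1 = A1 * D2" by (rule cross_all[symmetric]) (auto simp: S1_def S2_def)
lemma s105: "D2 * (A1 * z) = (A1 * D2) * z" by (simp only: mult.assoc[symmetric] r105)
lemma r106: "D2 * B1 = B1 * D2" by (rule cross_all[symmetric]) (auto simp: S1_def S2_def)
lemma s106: "D2 * (B1 * z) = (B1 * D2) * z" by (simp only: mult.assoc[symmetric] r106)
lemma r107: "A2 * G1 = G1 * A2" by (rule cross_all[symmetric]) (auto simp: S1_def S2_def)
lemma s107: "A2 * (G1 * z) = (G1 * A2) * z" by (simp only: mult.assoc[symmetric] r107)
lemma r108: "A2 * X1 = X1 * A2" by (rule cross_all[symmetric]) (auto simp: S1_def S2_def)
lemma s108: "A2 * (X1 * z) = (X1 * A2) * z" by (simp only: mult.assoc[symmetric] r108)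
lemma r109: "A2 * E1 a = E1 a * A2" by (rule cross_all[symmetric]) (auto simp: S1_def S2_def)
lemma s109: "A2 * (E1 a * z) = (E1 a * A2) * z" by (simp only: mult.assoc[symmetric] r109)
lemma r110: "A2 * H1 = H1 * A2" by (rule cross_all[symmetric]) (auto simp: S1_def S2_def)
lemma s110: "A2 * (H1 * z) = (H1 * A2) * z" by (simp only: mult.assoc[symmetric] r110)
lemma r111: "A2 * P1 = P1 * A2" by (rule cross_all[symmetric]) (auto simp: S1_def S2_def)
lemma s111: "A2 * (P1 * z) = (P1 * A2) * z" by (simp only: mult.assoc[symmetric] r111)
lemma r112: "A2 * K1 = K1 * A2" by (rule cross_all[symmetric]) (auto simp: S1_def S2_def)
lemma s112: "A2 * (K1 * z) = (K1 * A2) * z" by (simp only: mult.assoc[symmetric] r112)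
lemma r113: "A2 * D1 = D1 * A2" by (rule cross_all[symmetric]) (auto simp: S1_def S2_def)
lemma s113: "A2 * (D1 * z) = (D1 * A2) * z" by (simp only: mult.assoc[symmetric] r113)
lemma r114: "A2 * A1 = A1 * A2" by (rule cross_all[symmetric]) (auto simp: S1_def S2_def)
lemma s114: "A2 * (A1 * z) = (A1 * A2) * z" by (simp only: mult.assoc[symmetric] r114)
lemma r115: "A2 * B1 = B1 * A2" by (rule cross_all[symmetric]) (auto simp: S1_def S2_def)
lemma s115: "A2 * (B1 * z) = (B1 * A2) * z" by (simp only: mult.assoc[symmetric] r115)
lemma r116: "B2 * G1 = G1 * B2" by (rule cross_all[symmetric]) (auto simp: S1_def S2_def)
lemma s116: "B2 * (G1 * z) = (G1 * B2) * z" by (simp only: mult.assoc[symmetric] r116)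
lemma r117: "B2 * X1 = X1 * B2" by (rule cross_all[symmetric]) (auto simp: S1_def S2_def)
lemma s117: "B2 * (X1 * z) = (X1 * B2) * z" by (simp only: mult.assoc[symmetric] r117)
lemma r118: "B2 * E1 a = E1 a * B2" by (rule cross_all[symmetric]) (auto simp: S1_def S2_def)
lemma s118: "B2 * (E1 a * z) = (E1 a * B2) * z" by (simp only: mult.assoc[symmetric] r118)
lemma r119: "B2 * H1 = H1 * B2" by (rule cross_all[symmetric]) (auto simp: S1_def S2_def)
lemma s119: "B2 * (H1 * z) = (H1 * B2) * z" by (simp only: mult.assoc[symmetric] r119)
lemma r120: "B2 * P1 = P1 * B2" by (rule cross_all[symmetric]) (auto simp: S1_def S2_def)
lemma s120: "B2 * (P1 * z) = (P1 * B2) * z" by (simp only: mult.assoc[symmetric] r120)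
lemma r121: "B2 * K1 = K1 * B2" by (rule cross_all[symmetric]) (auto simp: S1_def S2_def)
lemma s121: "B2 * (K1 * z) = (K1 * B2) * z" by (simp only: mult.assoc[symmetric] r121)
lemma r122: "B2 * D1 = D1 * B2" by (rule cross_all[symmetric]) (auto simp: S1_def S2_def)
lemma s122: "B2 * (D1 * z) = (D1 * B2) * z" by (simp only: mult.assoc[symmetric] r122)
lemma r123: "B2 * A1 = A1 * B2" by (rule cross_all[symmetric]) (auto simp: S1_def S2_def)
lemma s123: "B2 * (A1 * z) = (A1 * B2) * z" by (simp only: mult.assoc[symmetric] r123)
lemma r124: "B2 * B1 = B1 * B2" by (rule cross_all[symmetric]) (auto simp: S1_def S2_def)
lemma s124: "B2 * (B1 * z) = (B1 * B2) * z" by (simp only: mult.assoc[symmetric] r124)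
lemma r125: "E1 a * G2 = G2 * E1 a" by (rule cross_all) (auto simp: S1_def S2_def)
lemma s125: "E1 a * (G2 * z) = (G2 * E1 a) * z" by (simp only: mult.assoc[symmetric] r125)
lemma r126: "H1 * G2 = G2 * H1" by (rule cross_all) (auto simp: S1_def S2_def)
lemma s126: "H1 * (G2 * z) = (G2 * H1) * z" by (simp only: mult.assoc[symmetric] r126)
lemma r127: "P1 * G2 = G2 * P1" by (rule cross_all) (auto simp: S1_def S2_def)
lemma s127: "P1 * (G2 * z) = (G2 * P1) * z" by (simp only: mult.assoc[symmetric] r127)
lemma r128: "K1 * G2 = G2 * K1" by (rule cross_all) (auto simp: S1_def S2_def)
lemma s128: "K1 * (G2 * z) = (G2 * K1) * z" by (simp only: mult.assoc[symmetric] r128)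
lemma r129: "D1 * G2 = G2 * D1" by (rule cross_all) (auto simp: S1_def S2_def)
lemma s129: "D1 * (G2 * z) = (G2 * D1) * z" by (simp only: mult.assoc[symmetric] r129)
lemma r130: "A1 * G2 = G2 * A1" by (rule cross_all) (auto simp: S1_def S2_def)
lemma s130: "A1 * (G2 * z) = (G2 * A1) * z" by (simp only: mult.assoc[symmetric] r130)
lemma r131: "B1 * G2 = G2 * B1" by (rule cross_all) (auto simp: S1_def S2_def)
lemma s131: "B1 * (G2 * z) = (G2 * B1) * z" by (simp only: mult.assoc[symmetric] r131)
lemma r132: "E1 a * X2 = X2 * E1 a" by (rule cross_all) (auto simp: S1_def S2_def)
lemma s132: "E1 a * (X2 * z) = (X2 * E1 a) * z" by (simp only: mult.assoc[symmetric] r132)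
lemma r133: "H1 * X2 = X2 * H1" by (rule cross_all) (auto simp: S1_def S2_def)
lemma s133: "H1 * (X2 * z) = (X2 * H1) * z" by (simp only: mult.assoc[symmetric] r133)
lemma r134: "P1 * X2 = X2 * P1" by (rule cross_all) (auto simp: S1_def S2_def)
lemma s134: "P1 * (X2 * z) = (X2 * P1) * z" by (simp only: mult.assoc[symmetric] r134)
lemma r135: "K1 * X2 = X2 * K1" by (rule cross_all) (auto simp: S1_def S2_def)
lemma s135: "K1 * (X2 * z) = (X2 * K1) * z" by (simp only: mult.assoc[symmetric] r135)
lemma r136: "D1 * X2 = X2 * D1" by (rule cross_all) (auto simp: S1_def S2_def)
lemma s136: "D1 * (X2 * z) = (X2 * D1) * z" by (simp only: mult.assoc[symmetric] r136)
lemma r137: "A1 * X2 = X2 * A1" by (rule cross_all) (auto simp: S1_def S2_def)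
lemma s137: "A1 * (X2 * z) = (X2 * A1) * z" by (simp only: mult.assoc[symmetric] r137)
lemma r138: "B1 * X2 = X2 * B1" by (rule cross_all) (auto simp: S1_def S2_def)
lemma s138: "B1 * (X2 * z) = (X2 * B1) * z" by (simp only: mult.assoc[symmetric] r138)
lemma r139: "G1 * t = t * G1" by (rule t_swap')
lemma s139: "G1 * (t * z) = (t * G1) * z" by (simp only: mult.assoc[symmetric] r139)
lemma r140: "X1 * t = t * X1" by (rule t_swap')
lemma s140: "X1 * (t * z) = (t * X1) * z" by (simp only: mult.assoc[symmetric] r140)
lemma r141: "E1 a * t = t * E1 a" by (rule t_swap')
lemma s141: "E1 a * (t * z) = (t * E1 a) * z" by (simp only: mult.assoc[symmetric] r141)
lemma r142: "H1 * t = t * H1" by (rule t_swap')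
lemma s142: "H1 * (t * z) = (t * H1) * z" by (simp only: mult.assoc[symmetric] r142)
lemma r143: "P1 * t = t * P1" by (rule t_swap')
lemma s143: "P1 * (t * z) = (t * P1) * z" by (simp only: mult.assoc[symmetric] r143)
lemma r144: "K1 * t = t * K1" by (rule t_swap')
lemma s144: "K1 * (t * z) = (t * K1) * z" by (simp only: mult.assoc[symmetric] r144)
lemma r145: "D1 * t = t * D1" by (rule t_swap')
lemma s145: "D1 * (t * z) = (t * D1) * z" by (simp only: mult.assoc[symmetric] r145)
lemma r146: "A1 * t = t * A1" by (rule t_swap')
lemma s146: "A1 * (t * z) = (t * A1) * z" by (simp only: mult.assoc[symmetric] r146)
lemma r147: "B1 * t = t * B1" by (rule t_swap')
lemma s147: "B1 * (t * z) = (t * B1) * z" by (simp only: mult.assoc[symmetric] r147)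
lemma r148: "G2 * t = t * G2" by (rule t_swap')
lemma s148: "G2 * (t * z) = (t * G2) * z" by (simp only: mult.assoc[symmetric] r148)
lemma r149: "X2 * t = t * X2" by (rule t_swap')
lemma s149: "X2 * (t * z) = (t * X2) * z" by (simp only: mult.assoc[symmetric] r149)
lemma r150: "E2 b * t = t * E2 b" by (rule t_swap')
lemma s150: "E2 b * (t * z) = (t * E2 b) * z" by (simp only: mult.assoc[symmetric] r150)
lemma r151: "H2 * t = t * H2" by (rule t_swap')
lemma s151: "H2 * (t * z) = (t * H2) * z" by (simp only: mult.assoc[symmetric] r151)
lemma r152: "P2 * t = t * P2" by (rule t_swap')
lemma s152: "P2 * (t * z) = (t * P2) * z" by (simp only: mult.assoc[symmetric] r152)
lemma r153: "K2 * t = t * K2" by (rule t_swap')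
lemma s153: "K2 * (t * z) = (t * K2) * z" by (simp only: mult.assoc[symmetric] r153)
lemma r154: "D2 * t = t * D2" by (rule t_swap')
lemma s154: "D2 * (t * z) = (t * D2) * z" by (simp only: mult.assoc[symmetric] r154)
lemma r155: "A2 * t = t * A2" by (rule t_swap')
lemma s155: "A2 * (t * z) = (t * A2) * z" by (simp only: mult.assoc[symmetric] r155)
lemma r156: "B2 * t = t * B2" by (rule t_swap')
lemma s156: "B2 * (t * z) = (t * B2) * z" by (simp only: mult.assoc[symmetric] r156)
lemma r157: "G1 * numeral n = numeral n * G1" by (rule num_comm)
lemma s157: "G1 * (numeral n * z) = (numeral n * G1) * z" by (simp only: mult.assoc[symmetric] r157)
lemma r158: "X1 * numeral n = numeral n * X1" by (rule num_comm)
lemma s158: "X1 * (numeral n * z) = (numeral n * X1) * z" by (simp only: mult.assoc[symmetric] r158)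
lemma r159: "E1 a * numeral n = numeral n * E1 a" by (rule num_comm)
lemma s159: "E1 a * (numeral n * z) = (numeral n * E1 a) * z" by (simp only: mult.assoc[symmetric] r159)
lemma r160: "H1 * numeral n = numeral n * H1" by (rule num_comm)
lemma s160: "H1 * (numeral n * z) = (numeral n * H1) * z" by (simp only: mult.assoc[symmetric] r160)
lemma r161: "P1 * numeral n = numeral n * P1" by (rule num_comm)
lemma s161: "P1 * (numeral n * z) = (numeral n * P1) * z" by (simp only: mult.assoc[symmetric] r161)
lemma r162: "K1 * numeral n = numeral n * K1" by (rule num_comm)
lemma s162: "K1 * (numeral n * z) = (numeral n * K1) * z" by (simp only: mult.assoc[symmetric] r162)
lemma r163: "D1 * numeral n = numeral n * D1" by (rule num_comm)
lemma s163: "D1 * (numeral n * z) = (numeral n * D1) * z" by (simp only: mult.assoc[symmetric] r163)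
lemma r164: "A1 * numeral n = numeral n * A1" by (rule num_comm)
lemma s164: "A1 * (numeral n * z) = (numeral n * A1) * z" by (simp only: mult.assoc[symmetric] r164)
lemma r165: "B1 * numeral n = numeral n * B1" by (rule num_comm)
lemma s165: "B1 * (numeral n * z) = (numeral n * B1) * z" by (simp only: mult.assoc[symmetric] r165)
lemma r166: "G2 * numeral n = numeral n * G2" by (rule num_comm)
lemma s166: "G2 * (numeral n * z) = (numeral n * G2) * z" by (simp only: mult.assoc[symmetric] r166)
lemma r167: "X2 * numeral n = numeral n * X2" by (rule num_comm)
lemma s167: "X2 * (numeral n * z) = (numeral n * X2) * z" by (simp only: mult.assoc[symmetric] r167)
lemma r168: "E2 b * numeral n = numeral n * E2 b" by (rule num_comm)
lemma s168: "E2 b * (numeral n * z) = (numeral n * E2 b) * z" by (simp only: mult.assoc[symmetric] r168)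
lemma r169: "H2 * numeral n = numeral n * H2" by (rule num_comm)
lemma s169: "H2 * (numeral n * z) = (numeral n * H2) * z" by (simp only: mult.assoc[symmetric] r169)
lemma r170: "P2 * numeral n = numeral n * P2" by (rule num_comm)
lemma s170: "P2 * (numeral n * z) = (numeral n * P2) * z" by (simp only: mult.assoc[symmetric] r170)
lemma r171: "K2 * numeral n = numeral n * K2" by (rule num_comm)
lemma s171: "K2 * (numeral n * z) = (numeral n * K2) * z" by (simp only: mult.assoc[symmetric] r171)
lemma r172: "D2 * numeral n = numeral n * D2" by (rule num_comm)
lemma s172: "D2 * (numeral n * z) = (numeral n * D2) * z" by (simp only: mult.assoc[symmetric] r172)
lemma r173: "A2 * numeral n = numeral n * A2" by (rule num_comm)
lemma s173: "A2 * (numeral n * z) = (numeral n * A2) * z" by (simp only: mult.assoc[symmetric] r173)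
lemma r174: "B2 * numeral n = numeral n * B2" by (rule num_comm)
lemma s174: "B2 * (numeral n * z) = (numeral n * B2) * z" by (simp only: mult.assoc[symmetric] r174)
lemma r175: "t * numeral n = numeral n * t" by (rule num_comm)
lemma s175: "t * (numeral n * z) = (numeral n * t) * z" by (simp only: mult.assoc[symmetric] r175)
lemma r176: "t * (K1 * G1) = K1 - K1 * E1 (-1)" by (rule c1.tGx)
lemma s176: "t * (K1 * (G1 * z)) = (K1 - K1 * E1 (-1)) * z" by (rule c1.tGx')
lemma r177: "t * (D1 * G1) = D1 - D1 * E1 (-1)" by (rule c1.tGx)
lemma s177: "t * (D1 * (G1 * z)) = (D1 - D1 * E1 (-1)) * z" by (rule c1.tGx')
lemma r178: "t * (A1 * G1) = A1 - A1 * E1 (-1)" by (rule c1.tGx)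
lemma s178: "t * (A1 * (G1 * z)) = (A1 - A1 * E1 (-1)) * z" by (rule c1.tGx')
lemma r179: "t * (B1 * G1) = B1 - B1 * E1 (-1)" by (rule c1.tGx)
lemma s179: "t * (B1 * (G1 * z)) = (B1 - B1 * E1 (-1)) * z" by (rule c1.tGx')
lemma r180: "t * (K2 * G2) = K2 - K2 * E2 (-1)" by (rule c2.tGx)
lemma s180: "t * (K2 * (G2 * z)) = (K2 - K2 * E2 (-1)) * z" by (rule c2.tGx')
lemma r181: "t * (D2 * G2) = D2 - D2 * E2 (-1)" by (rule c2.tGx)
lemma s181: "t * (D2 * (G2 * z)) = (D2 - D2 * E2 (-1)) * z" by (rule c2.tGx')
lemma r182: "t * (A2 * G2) = A2 - A2 * E2 (-1)" by (rule c2.tGx)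
lemma s182: "t * (A2 * (G2 * z)) = (A2 - A2 * E2 (-1)) * z" by (rule c2.tGx')
lemma r183: "t * (B2 * G2) = B2 - B2 * E2 (-1)" by (rule c2.tGx)
lemma s183: "t * (B2 * (G2 * z)) = (B2 - B2 * E2 (-1)) * z" by (rule c2.tGx')
lemmas RS = r0 s0 r1 s1 r2 s2 r3 s3 r4 s4 r5 s5 r6 s6 r7 s7 r8 s8 r9 s9 r10 s10 r11 s11 r12 s12 r13 s13 r14 s14 r15 s15 r16 s16 r17 s17 r18 s18 r19 s19 r20 s20 r21 s21 r22 s22 r23 s23 r24 s24 r25 s25 r26 s26 r27 s27 r28 s28 r29 s29 r30 s30 r31 s31 r32 s32 r33 s33 r34 s34 r35 s35 r36 s36 r37 s37 r38 s38 r39 s39 r40 s40 r41 s41 r42 s42 r43 s43 r44 s44 r45 s45 r46 s46 r47 s47 r48 s48 r49 s49 r50 s50 r51 s51 r52 s52 r53 s53 r54 s54 r55 s55 r56 s56 r57 s57 r58 s58 r59 s59 r60 s60 r61 s61 r62 s62 r63 s63 r64 s64 r65 s65 r66 s66 r67 s67 r68 s68 r69 s69 r70 s70 r71 s71 r72 s72 r73 s73 r74 s74 r75 s75 r76 s76 r77 s77 r78 s78 r79 s79 r80 s80 r81 s81 r82 s82 r83 s83 r84 s84 r85 s85 r86 s86 r87 s87 r88 s88 r89 s89 r90 s90 r91 s91 r92 s92 r93 s93 r94 s94 r95 s95 r96 s96 r97 s97 r98 s98 r99 s99 r100 s100 r101 s101 r102 s102 r103 s103 r104 s104 r105 s105 r106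 s106 r107 s107 r108 s108 r109 s109 r110 s110 r111 s111 r112 s112 r113 s113 r114 s114 r115 s115 r116 s116 r117 s117 r118 s118 r119 s119 r120 s120 r121 s121 r122 s122 r123 s123 r124 s124 r125 s125 r126 s126 r127 s127 r128 s128 r129 s129 r130 s130 r131 s131 r132 s132 r133 s133 r134 s134 r135 s135 r136 s136 r137 s137 r138 s138 r139 s139 r140 s140 r141 s141 r142 s142 r143 s143 r144 s144 r145 s145 r146 s146 r147 s147 r148 s148 r149 s149 r150 s150 r151 s151 r152 s152 r153 s153 r154 s154 r155 s155 r156 s156 r157 s157 r158 s158 r159 s159 r160 s160 r161 s161 r162 s162 r163 s163 r164 s164 r165 s165 r166 s166 r167 s167 r168 s168 r169 s169 r170 s170 r171 s171 r172 s172 r173 s173 r174 s174 r175 s175 r176 s176 r177 s177 r178 s178 r179 s179 r180 s180 r181 s181 r182 s182 r183 s183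


lemma H21: "H2 * H1 = H1 * H2" using cross by auto
lemma EdH: "texp t c (H2 + H1) = E2 c * E1 c" by (rule c1.texp_add[OF H21])
lemma XdH: "expm1_t t (H2 + H1) = X2 + E2 1 * X1"
  unfolding c1.expm1_sexp by (rule c1.sexp_add[OF H21])
lemma GdH: "onemexp_t t (H2 + H1) = G2 + E2 (-1) * G1"
  unfolding c1.onemexp_sexp by (rule c1.sexp_add[OF H21])
lemma rel0: "(K2 + K1 - t * (D1 * (texp t (-1) H2 * P2))) * (H2 + H1) - (H2 + H1) * (K2 + K1 - t * (D1 * (texp t (-1) H2 * P2))) = texp t (-1) (H2 + H1) * (P2 + P1 * texp t 1 H2)"
  unfolding EdH XdH GdH by (simp add: algebra_simps power2_eq_square scaleR_conv_of_real RS nb0 nb1 c1.w2 c2.w2)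
lemma rel1: "(K2 + K1 - t * (D1 * (texp t (-1) H2 * P2))) * (P2 + P1 * texp t 1 H2) - (P2 + P1 * texp t 1 H2) * (K2 + K1 - t * (D1 * (texp t (-1) H2 * P2))) = expm1_t t (H2 + H1)"
  unfolding EdH XdH GdH by (simp add: algebra_simps power2_eq_square scaleR_conv_of_real RS nb0 nb1 c1.w2 c2.w2)
lemma rel2: "(H2 + H1) * (P2 + P1 * texp t 1 H2) - (P2 + P1 * texp t 1 H2) * (H2 + H1) = 0"
  unfolding EdH XdH GdH by (simp add: algebra_simps power2_eq_square scaleR_conv_of_real RS nb0 nb1 c1.w2 c2.w2)
lemma rel3: "(D2 + D1 * texp t (-1) H2) * (H2 + H1) - (H2 + H1) * (D2 + D1 * texp t (-1) H2) = onemexp_t t (H2 + H1)"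
  unfolding EdH XdH GdH by (simp add: algebra_simps power2_eq_square scaleR_conv_of_real RS nb0 nb1 c1.w2 c2.w2)
lemma rel4: "(D2 + D1 * texp t (-1) H2) * (A2 + A1 * texp t (-1) H2) - (A2 + A1 * texp t (-1) H2) * (D2 + D1 * texp t (-1) H2) = - (A2 + A1 * texp t (-1) H2) + t * (D2 + D1 * texp t (-1) H2)\<^sup>2"
  unfolding EdH XdH GdH by (simp add: algebra_simps power2_eq_square scaleR_conv_of_real RS nb0 nb1 c1.w2 c2.w2)
lemma rel5: "(H2 + H1) * (A2 + A1 * texp t (-1) H2) - (A2 + A1 * texp t (-1) H2) * (H2 + H1) = - 2 * (D2 + D1 * texp t (-1) H2)"
  unfolding EdH XdH GdH by (simp add: algebra_simps power2_eq_square scaleR_conv_of_real RS nb0 nb1 c1.w2 c2.w2)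
lemma rel6: "(D2 + D1 * texp t (-1) H2) * (P2 + P1 * texp t 1 H2) - (P2 + P1 * texp t 1 H2) * (D2 + D1 * texp t (-1) H2) = (P2 + P1 * texp t 1 H2)"
  unfolding EdH XdH GdH by (simp add: algebra_simps power2_eq_square scaleR_conv_of_real RS nb0 nb1 c1.w2 c2.w2)
lemma rel7: "(D2 + D1 * texp t (-1) H2) * (B2 + B1 * texp t (-1) H2 + 2 * t * (D1 * (texp t (-1) H2 * K2)) - t\<^sup>2 * ((D1 * (D1 + 1)) * (texp t (-2) H2 * P2))) - (B2 + B1 * texp t (-1) H2 + 2 * t * (D1 * (texp t (-1) H2 * K2)) - t\<^sup>2 * ((D1 * (D1 + 1)) * (texp t (-2) H2 * P2))) * (D2 + D1 * texp t (-1) H2) = - (B2 + B1 * texp t (-1) H2 + 2 * t * (D1 * (texp t (-1) H2 * K2)) - t\<^sup>2 * ((D1 * (D1 + 1)) * (texp t (-2) H2 * P2)))"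
  unfolding EdH XdH GdH by (simp add: algebra_simps power2_eq_square scaleR_conv_of_real RS nb0 nb1 c1.w2 c2.w2)
lemma rel8: "(P2 + P1 * texp t 1 H2) * (B2 + B1 * texp t (-1) H2 + 2 * t * (D1 * (texp t (-1) H2 * K2)) - t\<^sup>2 * ((D1 * (D1 + 1)) * (texp t (-2) H2 * P2))) - (B2 + B1 * texp t (-1) H2 + 2 * t * (D1 * (texp t (-1) H2 * K2)) - t\<^sup>2 * ((D1 * (D1 + 1)) * (texp t (-2) H2 * P2))) * (P2 + P1 * texp t 1 H2) = 2 * (D2 + D1 * texp t (-1) H2)"
  unfolding EdH XdH GdH by (simp add: algebra_simps power2_eq_square scaleR_conv_of_real RS nb0 nb1 c1.w2 c2.w2)
lemma rel9: "(K2 + K1 - t * (D1 * (texp t (-1) H2 * P2))) * (A2 + A1 * texp t (-1) H2) - (A2 + A1 * texp t (-1) H2) * (K2 + K1 - t * (D1 * (texp t (-1) H2 * P2))) = (B2 + B1 * texp t (-1) H2 + 2 * t * (D1 * (texp t (-1) H2 * K2)) - t\<^sup>2 * ((D1 * (D1 + 1)) * (texp t (-2) H2 * P2)))"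
  unfolding EdH XdH GdH by (simp add: algebra_simps power2_eq_square scaleR_conv_of_real RS nb0 nb1 c1.w2 c2.w2)
lemma rel10: "(K2 + K1 - t * (D1 * (texp t (-1) H2 * P2))) * (B2 + B1 * texp t (-1) H2 + 2 * t * (D1 * (texp t (-1) H2 * K2)) - t\<^sup>2 * ((D1 * (D1 + 1)) * (texp t (-2) H2 * P2))) - (B2 + B1 * texp t (-1) H2 + 2 * t * (D1 * (texp t (-1) H2 * K2)) - t\<^sup>2 * ((D1 * (D1 + 1)) * (texp t (-2) H2 * P2))) * (K2 + K1 - t * (D1 * (texp t (-1) H2 * P2))) = (A2 + A1 * texp t (-1) H2) - t * (D2 + D1 * texp t (-1) H2)\<^sup>2"
  unfolding EdH XdH GdH by (simp add: algebra_simps power2_eq_square scaleR_conv_of_real RS nb0 nb1 c1.w2 c2.w2)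
lemma rel11: "(A2 + A1 * texp t (-1) H2) * (B2 + B1 * texp t (-1) H2 + 2 * t * (D1 * (texp t (-1) H2 * K2)) - t\<^sup>2 * ((D1 * (D1 + 1)) * (texp t (-2) H2 * P2))) - (B2 + B1 * texp t (-1) H2 + 2 * t * (D1 * (texp t (-1) H2 * K2)) - t\<^sup>2 * ((D1 * (D1 + 1)) * (texp t (-2) H2 * P2))) * (A2 + A1 * texp t (-1) H2) = - t * ((D2 + D1 * texp t (-1) H2) * (B2 + B1 * texp t (-1) H2 + 2 * t * (D1 * (texp t (-1) H2 * K2)) - t\<^sup>2 * ((D1 * (D1 + 1)) * (texp t (-2) H2 * P2))) + (B2 + B1 * texp t (-1) H2 + 2 * t * (D1 * (texp t (-1) H2 * K2)) - t\<^sup>2 * ((D1 * (D1 + 1)) * (texp t (-2) H2 * P2))) * (D2 + D1 * texp t (-1) H2))"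
  unfolding EdH XdH GdH by (simp add: algebra_simps power2_eq_square scaleR_conv_of_real RS nb0 nb1 c1.w2 c2.w2)
lemma rel12: "(H2 + H1) * (B2 + B1 * texp t (-1) H2 + 2 * t * (D1 * (texp t (-1) H2 * K2)) - t\<^sup>2 * ((D1 * (D1 + 1)) * (texp t (-2) H2 * P2))) - (B2 + B1 * texp t (-1) H2 + 2 * t * (D1 * (texp t (-1) H2 * K2)) - t\<^sup>2 * ((D1 * (D1 + 1)) * (texp t (-2) H2 * P2))) * (H2 + H1) = texp t (-1) (H2 + H1) * (K2 + K1 - t * (D1 * (texp t (-1) H2 * P2))) + (K2 + K1 - t * (D1 * (texp t (-1) H2 * P2))) * texp t (-1) (H2 + H1)"
  unfolding EdH XdH GdH by (simp add: algebra_simps power2_eq_square scaleR_conv_of_real RS nb0 nb1 c1.w2 c2.w2)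
lemma rel13: "(P2 + P1 * texp t 1 H2) * (A2 + A1 * texp t (-1) H2) - (A2 + A1 * texp t (-1) H2) * (P2 + P1 * texp t 1 H2) = - 2 * (K2 + K1 - t * (D1 * (texp t (-1) H2 * P2))) - t * ((D2 + D1 * texp t (-1) H2) * (P2 + P1 * texp t 1 H2) + (P2 + P1 * texp t 1 H2) * (D2 + D1 * texp t (-1) H2))"
  unfolding EdH XdH GdH by (simp add: algebra_simps power2_eq_square scaleR_conv_of_real RS nb0 nb1 c1.w2 c2.w2)
lemma rel14: "(K2 + K1 - t * (D1 * (texp t (-1) H2 * P2))) * (D2 + D1 * texp t (-1) H2) - (D2 + D1 * texp t (-1) H2) * (K2 + K1 - t * (D1 * (texp t (-1) H2 * P2))) = 0"
  unfolding EdH XdH GdH by (simp add: algebra_simps power2_eq_square scaleR_conv_of_real RS nb0 nb1 c1.w2 c2.w2)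

end



locale three = a: two t H1 P1 K1 D1 A1 B1 H2 P2 K2 D2 A2 B2 + b: two t H2 P2 K2 D2 A2 B2 H3 P3 K3 D3 A3 B3
  + c: two t H1 P1 K1 D1 A1 B1 H3 P3 K3 D3 A3 B3
  for t :: "'a::real_algebra_1" and H1 P1 K1 D1 A1 B1 H2 P2 K2 D2 A2 B2 H3 P3 K3 D3 A3 B3
begin

lemma coass_H: "(H3 + (H2 + H1)) = ((H3 + H2) + H1)"
  unfolding b.EdH by (simp add: algebra_simps power2_eq_square scaleR_conv_of_real a.RS b.RS c.RS nb0 nb1 a.c1.w2 a.c2.w2 b.c2.w2)
lemma coass_P: "(P3 + (P2 + P1 * texp t (1) (H2)) * texp t (1) (H3)) = ((P3 + P2 * texp t (1) (H3)) + P1 * texp t (1) ((H3 + H2)))"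
  unfolding b.EdH by (simp add: algebra_simps power2_eq_square scaleR_conv_of_real a.RS b.RS c.RS nb0 nb1 a.c1.w2 a.c2.w2 b.c2.w2)
lemma coass_K: "(K3 + (K2 + K1 - t * (D1 * (texp t (-1) (H2) * P2))) - t * ((D2 + D1 * texp t (-1) (H2)) * (texp t (-1) (H3) * P3))) = ((K3 + K2 - t * (D2 * (texp t (-1) (H3) * P3))) + K1 - t * (D1 * (texp t (-1) ((H3 + H2)) * (P3 + P2 * texp t (1) (H3)))))"
  unfolding b.EdH by (simp add: algebra_simps power2_eq_square scaleR_conv_of_real a.RS b.RS c.RS nb0 nb1 a.c1.w2 a.c2.w2 b.c2.w2)
lemma coass_D: "(D3 + (D2 + D1 * texp t (-1) (H2)) * texp t (-1) (H3)) = ((D3 + D2 * texp t (-1) (H3)) + D1 * texp t (-1) ((H3 + H2)))"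
  unfolding b.EdH by (simp add: algebra_simps power2_eq_square scaleR_conv_of_real a.RS b.RS c.RS nb0 nb1 a.c1.w2 a.c2.w2 b.c2.w2)
lemma coass_A: "(A3 + (A2 + A1 * texp t (-1) (H2)) * texp t (-1) (H3)) = ((A3 + A2 * texp t (-1) (H3)) + A1 * texp t (-1) ((H3 + H2)))"
  unfolding b.EdH by (simp add: algebra_simps power2_eq_square scaleR_conv_of_real a.RS b.RS c.RS nb0 nb1 a.c1.w2 a.c2.w2 b.c2.w2)
lemma coass_B: "(B3 + (B2 + B1 * texp t (-1) (H2) + 2 * t * (D1 * (texp t (-1) (H2) * K2)) - t\<^sup>2 * ((D1 * (D1 + 1)) * (texp t (-2) (H2) * P2))) * texp t (-1) (H3) + 2 * t * ((D2 + D1 * texp t (-1) (H2)) * (texp t (-1) (H3) * K3)) - t\<^sup>2 * (((D2 + D1 * texp t (-1) (H2)) * ((D2 + D1 * texp t (-1) (H2)) + 1)) * (texp t (-2) (H3) * P3))) = ((B3 + B2 * texp t (-1) (H3) + 2 * t * (D2 * (texp t (-1) (H3) * K3)) - t\<^sup>2 * ((D2 * (D2 + 1)) * (texp t (-2) (H3) * P3))) + B1 * texp t (-1) ((H3 + H2)) + 2 * t * (D1 * (texp t (-1) ((H3 + H2)) * (K3 + K2 - t * (D2 * (texp t (-1) (H3) * P3))))) - t\<^sup>2 * ((D1 * (D1 + 1)) * (texp t (-2) ((H3 + H2)) * (P3 + P2 * texp t (1) (H3)))))"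
  unfolding b.EdH by (simp add: algebra_simps power2_eq_square scaleR_conv_of_real a.RS b.RS c.RS nb0 nb1 a.c1.w2 a.c2.w2 b.c2.w2)

end



context adic begin

lemma subalg_pow: "X \<in> adic_subalg t S \<Longrightarrow> X ^ n \<in> adic_subalg t S"
proof (induct n)
  case 0 then show ?case by (simp add: adic_subalg.one)
next
  case (Suc n) then show ?case by (simp add: adic_subalg.mult)
qed

lemma subalg_texp:
  assumes X: "X \<in> adic_subalg t S"
  shows "texp t c X \<in> adic_subalg t S"
proof -
  let ?f = "\<lambda>n. (1 / fact n) *\<^sub>R (c *\<^sub>R (t * X)) ^ n"
  have fd: "adic_div t n (?f n)" for n
  proof -
    have "?f n = (c ^ n / fact n) *\<^sub>R (t ^ n * X ^ n)"
      by (simp add: scaleR_power' comm_power[OF central])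
    then show ?thesis using pser_div by metis
  qed
  have tX: "c *\<^sub>R (t * X) \<in> adic_subalg t S" using X by (intro adic_subalg.scale adic_subalg.mult adic_subalg.tau)
  have "psum ?f n \<in> adic_subalg t S" for n
    unfolding psum_def
  proof (induct n)
    case 0
    have "(0::real) *\<^sub>R 1 \<in> adic_subalg t S" by (intro adic_subalg.scale adic_subalg.one)
    then show ?case by simp
  next
    case (Suc n)
    have "(1 / fact n) *\<^sub>R (c *\<^sub>R (t * X)) ^ n \<in> adic_subalg t S"
      by (rule adic_subalg.scale[OF subalg_pow[OF tX]])
    then show ?case using Suc by (simp add: adic_subalg.add)
  qed
  moreover have "adic_conv t (psum ?f) (texp t c X)"
    unfolding texp_def by (rule conv_series[OF fd])
  ultimately show ?thesis by (rule adic_subalg.limit)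
qed

lemma suminf_finite1:
  assumes "\<And>n. n \<ge> 1 \<Longrightarrow> f n = 0"
  shows "adic_suminf t f = f 0"
proof -
  have fd: "adic_div t n (f n)" for n using assms by (cases n) auto
  have d: "adic_div t n (f 0 - psum f n)" for n
  proof (cases n)
    case (Suc m)
    have "psum f (Suc m) = f 0" unfolding psum_def using assms
      by (simp add: sum.lessThan_Suc_shift del: sum.lessThan_Suc)
    then show ?thesis using Suc by simp
  qed simp
  have c1: "adic_conv t (psum f) (f 0)" by (rule conv_close[OF conv_const d])
  have c2: "adic_conv t (psum f) (adic_suminf t f)" by (rule conv_series[OF fd])
  show ?thesis by (rule conv_unique[OF c2 c1])
qed

end

lemma adic_ok_0: "adic_ok (0::'a::real_algebra_1)"
  unfolding adic_ok_def
proof (intro conjI allI impI)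
  fix y :: 'a show "0 * y = y * 0" by simp
next
  fix x :: 'a assume "\<forall>k. adic_div 0 k x"
  then have "adic_div 0 1 x" by blast
  then show "x = 0" by (simp add: adic_div_def)
next
  fix s :: "nat \<Rightarrow> 'a" assume "adic_cauchy 0 s"
  then obtain N where N: "\<forall>m\<ge>N. \<forall>n\<ge>N. adic_div 0 1 (s m - s n)" unfolding adic_cauchy_def by blast
  have "adic_conv 0 s (s N)" unfolding adic_conv_def
  proof (intro allI exI[of _ N] impI)
    fix k n :: nat assume "n \<ge> N"
    then have "adic_div 0 1 (s N - s n)" using N by blast
    then have "s N - s n = 0" by (simp add: adic_div_def)
    then show "adic_div 0 k (s N - s n)" unfolding adic_div_def by (intro exI[of _ 0]) simp
  qed
  then show "\<exists>x. adic_conv 0 s x" by blast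
qed

lemma t0_texp: "texp (0::'a::real_algebra_1) c X = 1"
proof -
  interpret adic "0::'a" by unfold_locales (rule adic_ok_0)
  show ?thesis unfolding texp_def by (subst suminf_finite1) (auto simp: power_0_left)
qed

lemma t0_expm1: "expm1_t (0::'a::real_algebra_1) X = X"
proof -
  interpret adic "0::'a" by unfold_locales (rule adic_ok_0)
  show ?thesis unfolding expm1_t_def by (subst suminf_finite1) (auto simp: power_0_left)
qed

lemma t0_onemexp: "onemexp_t (0::'a::real_algebra_1) X = X"
proof -
  interpret adic "0::'a" by unfold_locales (rule adic_ok_0)
  show ?thesis unfolding onemexp_t_def by (subst suminf_finite1) (auto simp: power_0_left)
qed

lemma part4: "so22_rels 0 g \<longleftrightarrow> so22_classical_rels g"
  unfolding so22_rels_def so22_classical_rels_def Let_def t0_texp t0_expm1 t0_onemexp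
  by (simp add: mult_2)




lemma copy_of_rels:
  assumes "adic_ok t" "so22_rels t g"
  shows "copy t (gH g) (gP g) (gK g) (gD g) (gC1 g) (gC2 g)"
  using assms unfolding copy_def copy_axioms_def adic_def so22_rels_def Let_def br_def by auto

lemma two_of_rels:
  assumes "adic_ok t" "so22_rels t g1" "so22_rels t g2" "gens_commute g1 g2"
  shows "two t (gH g1) (gP g1) (gK g1) (gD g1) (gC1 g1) (gC2 g1) (gH g2) (gP g2) (gK g2) (gD g2) (gC1 g2) (gC2 g2)"
  unfolding two_def two_axioms_def
  using copy_of_rels[OF assms(1,2)] copy_of_rels[OF assms(1,3)] assms(4)
  unfolding gens_commute_def gens_set_def by blast

theorem mainTheorem1:
  fixes t :: "'a::real_algebra_1"
  assumes "adic_ok t"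
  shows
   "(\<forall>g1 g2. so22_rels t g1 \<and> so22_rels t g2 \<and> gens_commute g1 g2
        \<longrightarrow> so22_rels t (so22_delta t g1 g2))
  \<and> (\<forall>g1 g2 g3. so22_rels t g1 \<and> so22_rels t g2 \<and> so22_rels t g3
        \<and> gens_commute g1 g2 \<and> gens_commute g1 g3 \<and> gens_commute g2 g3
        \<longrightarrow> so22_delta t (so22_delta t g1 g2) g3 = so22_delta t g1 (so22_delta t g2 g3))
  \<and> (\<forall>g1 g2. so22_rels t g1 \<and> so22_rels t g2 \<and> gens_commute g1 g2 \<longrightarrow>
        (let S = {gD g1, gH g1, gC1 g1, gD g2, gH g2, gC1 g2} in
          gD (so22_delta t g1 g2) \<in> adic_subalg t S
        \<and> gH (so22_delta t g1 g2) \<in> adic_subalg t S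
        \<and> gC1 (so22_delta t g1 g2) \<in> adic_subalg t S))
  \<and> (\<forall>g :: 'a gens. so22_rels 0 g \<longleftrightarrow> so22_classical_rels g)"
proof (intro conjI allI impI)
  interpret adic t by unfold_locales (rule assms)
  fix g1 g2 assume h: "so22_rels t g1 \<and> so22_rels t g2 \<and> gens_commute g1 g2"
  interpret T: two t "gH g1" "gP g1" "gK g1" "gD g1" "gC1 g1" "gC2 g1" "gH g2" "gP g2" "gK g2" "gD g2" "gC1 g2" "gC2 g2"
    using two_of_rels assms h by blast
  show "so22_rels t (so22_delta t g1 g2)"
    unfolding so22_rels_def so22_delta_def Let_def br_def gens.sel
    using T.rel0 T.rel1 T.rel2 T.rel3 T.rel4 T.rel5 T.rel6 T.rel7 T.rel8 T.rel9 T.rel10 T.rel11 T.rel12 T.rel13 T.rel14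
    by blast
next
  interpret adic t by unfold_locales (rule assms)
  fix g1 g2 g3 assume h: "so22_rels t g1 \<and> so22_rels t g2 \<and> so22_rels t g3
        \<and> gens_commute g1 g2 \<and> gens_commute g1 g3 \<and> gens_commute g2 g3"
  interpret T: three t "gH g1" "gP g1" "gK g1" "gD g1" "gC1 g1" "gC2 g1" "gH g2" "gP g2" "gK g2" "gD g2" "gC1 g2" "gC2 g2"
     "gH g3" "gP g3" "gK g3" "gD g3" "gC1 g3" "gC2 g3"
    unfolding three_def using two_of_rels assms h by blast
  show "so22_delta t (so22_delta t g1 g2) g3 = so22_delta t g1 (so22_delta t g2 g3)"
    unfolding so22_delta_def Let_def gens.sel gens.inject
    using T.coass_H T.coass_P T.coass_K T.coass_D T.coass_A T.coass_B by blast
next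
  interpret adic t by unfold_locales (rule assms)
  fix g1 g2 assume h: "so22_rels t g1 \<and> so22_rels t g2 \<and> gens_commute g1 g2"
  define S where "S = {gD g1, gH g1, gC1 g1, gD g2, gH g2, gC1 g2}"
  have g: "gD g1 \<in> adic_subalg t S" "gH g1 \<in> adic_subalg t S" "gC1 g1 \<in> adic_subalg t S"
     "gD g2 \<in> adic_subalg t S" "gH g2 \<in> adic_subalg t S" "gC1 g2 \<in> adic_subalg t S"
    unfolding S_def by (auto intro: adic_subalg.gen)
  have e: "texp t (-1) (gH g2) \<in> adic_subalg t S" by (rule subalg_texp[OF g(5)])
  show "let S = {gD g1, gH g1, gC1 g1, gD g2, gH g2, gC1 g2} in
          gD (so22_delta t g1 g2) \<in> adic_subalg t S
        \<and> gH (so22_delta t g1 g2) \<in> adic_subalg t S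
        \<and> gC1 (so22_delta t g1 g2) \<in> adic_subalg t S"
    unfolding S_def[symmetric] Let_def so22_delta_def gens.sel
    using g e by (simp add: adic_subalg.add adic_subalg.mult)
next
  fix g :: "'a gens"
  show "so22_rels 0 g \<longleftrightarrow> so22_classical_rels g" by (rule part4)
qed


end
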